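(* Let $\mathfrak g$ be a Lie algebra over a field $\mathbb{K}$ of characteristic zero, with a vector space decomposition $\mathfrak g=\mathfrak g^-\oplus\mathfrak g^+$, and let $P:\mathfrak g\to\mathfrak g$ be the idempotent projection onto $\mathfrak g^-$ along $\mathfrak g^+$. Let $\bar{\mathfrak g}:=\mathfrak g[[s,t]]$ (commuting formal variables $s,t$), filtered by total degree in $s,t$, so $\bar{\mathfrak g}_1=s\mathfrak g[[s,t]]+t\mathfrak g[[s,t]]$; extend $P$ coefficientwise to $\bar{\mathfrak g}$ and put $\tilde P=\mathrm{id}-P$. Let $\chi:\bar{\mathfrak g}_1\to\bar{\mathfrak g}_1$ be the BCH-recursion map associated to $P$, and $D_P(v):=\big(P(\chi(v)),\tilde P(\chi(v))\big)$. Set $U:=s\mathfrak g^-[[s,t]]\times t\mathfrak g^+[[s,t]]$ and $V:=s\mathfrak g^-[[s,t]]\oplus t\mathfrak g^+[[s,t]]$. Then: (1) the map $C(a_-,a_+)=a_-+a_++\mathrm{BCH}(a_-,a_+)$ restricts to a bijection $U\to V$, whose inverse is the restriction of $D_P$ to $V$; (2) the map $\Psi:t\mathfrak g^+[[s,t]]\times s\mathfrak g^-[[s,t]]\to s\mathfrak g^-[[s,t]]\times t\mathfrak g^+[[s,t]]$, $\Psi(a_+,a_-):=D_P\big(C(a_+,a_-)\big)=\Big(P\big(\chi(C(a_+,a_-))\big),\tilde P\big(\chi(C(a_+,a_-))\big)\Big)$, is well defined, bijective, and is the unique bijection such that for all $a_+\in t\mathfrak g^+[[s,t]]$, $a_-\in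 s\mathfrak g^-[[s,t]]$, $$\exp(a_+)\exp(a_-)=\exp\big(\Psi_-(a_+,a_-)\big)\exp\big(\Psi_+(a_+,a_-)\big),$$ where $\Psi=(\Psi_-,\Psi_+)$.
   Context: $\mathrm{BCH}(x,y)$ is the Baker--Campbell--Hausdorff Lie series, defined by $\exp(x)\exp(y)=\exp(x+y+\mathrm{BCH}(x,y))$; for $u,v\in\bar{\mathfrak g}_1$ it converges in $\bar{\mathfrak g}_1$. Exponentials are taken in the completion of the universal enveloping algebra of $\bar{\mathfrak g}$ with respect to the filtration by total $(s,t)$-degree. The BCH-recursion map associated to $P$ is the unique map $\chi:\bar{\mathfrak g}_1\to\bar{\mathfrak g}_1$ with $\chi(a)=a-\mathrm{BCH}\big(P(\chi(a)),\tilde P(\chi(a))\big)$ for all $a$, obtained as the limit of the iteration $\chi_{(0)}(a)=a$, $\chi_{(n+1)}(a)=a-\mathrm{BCH}(P(\chi_{(n)}(a)),\tilde P(\chi_{(n)}(a)))$. *)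

theory Defs
  imports Main
begin

text \<open>Model: the Lie algebra g over a field 'k of characteristic zero is given as a
Lie subalgebra G (closed under commutators) of an associative unital 'k-algebra 'a
(scalar action sc). Power series in commuting variables s,t with coefficients in 'a
are functions nat => nat => 'a (f i j = coefficient of s^i t^j).\<close>

type_synonym 'a fps2 = "nat \<Rightarrow> nat \<Rightarrow> 'a"

definition kalg :: "('k::field \<Rightarrow> 'a::ring_1 \<Rightarrow> 'a) \<Rightarrow> bool" where
  "kalg sc \<longleftrightarrow>
     (\<forall>a b x. sc (a + b) x = sc a x + sc b x) \<and>
     (\<forall>a x y. sc a (x + y) = sc a x + sc a y) \<and>
     (\<forall>a b x. sc (a * b) x = sc a (sc b x)) \<and>
     (\<forall>x. sc 1 x = x) \<and>
     (\<forall>a x y. sc a (x * y) = sc a x * y) \<and>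
     (\<forall>a x y. sc a (x * y) = x * sc a y)"

definition subspace_k :: "('k \<Rightarrow> 'a::ab_group_add \<Rightarrow> 'a) \<Rightarrow> 'a set \<Rightarrow> bool" where
  "subspace_k sc S \<longleftrightarrow> 0 \<in> S \<and> (\<forall>x\<in>S. \<forall>y\<in>S. x + y \<in> S) \<and> (\<forall>c. \<forall>x\<in>S. sc c x \<in> S)"

definition fadd :: "'a::plus fps2 \<Rightarrow> 'a fps2 \<Rightarrow> 'a fps2" where
  "fadd f g = (\<lambda>i j. f i j + g i j)"

definition fsub :: "'a::minus fps2 \<Rightarrow> 'a fps2 \<Rightarrow> 'a fps2" where
  "fsub f g = (\<lambda>i j. f i j - g i j)"

definition fone :: "'a::{zero,one} fps2" where
  "fone = (\<lambda>i j. if i = 0 \<and> j = 0 then 1 else 0)"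

definition fmul :: "'a::ring_1 fps2 \<Rightarrow> 'a fps2 \<Rightarrow> 'a fps2" where
  "fmul f g = (\<lambda>i j. \<Sum>p\<le>i. \<Sum>q\<le>j. f p q * g (i - p) (j - q))"

primrec fpow :: "'a::ring_1 fps2 \<Rightarrow> nat \<Rightarrow> 'a fps2" where
  "fpow f 0 = fone"
| "fpow f (Suc n) = fmul f (fpow f n)"

text \<open>exp(f) = sum_n f^n/n!; for f without constant term, f^n has total degree >= n,
so the coefficient of s^i t^j is the finite sum over n <= i+j.\<close>
definition fexp :: "('k::field_char_0 \<Rightarrow> 'a::ring_1 \<Rightarrow> 'a) \<Rightarrow> 'a fps2 \<Rightarrow> 'a fps2" where
  "fexp sc f = (\<lambda>i j. \<Sum>n\<le>i+j. sc (inverse (fact n)) (fpow f n i j))"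

definition BCH :: "('k::field_char_0 \<Rightarrow> 'a::ring_1 \<Rightarrow> 'a) \<Rightarrow> 'a fps2 \<Rightarrow> 'a fps2 \<Rightarrow> 'a fps2" where
  "BCH sc x y = (THE z. z 0 0 = 0 \<and> fmul (fexp sc x) (fexp sc y) = fexp sc (fadd (fadd x y) z))"

definition Cmap :: "('k::field_char_0 \<Rightarrow> 'a::ring_1 \<Rightarrow> 'a) \<Rightarrow> 'a fps2 \<Rightarrow> 'a fps2 \<Rightarrow> 'a fps2" where
  "Cmap sc x y = fadd (fadd x y) (BCH sc x y)"

definition proj :: "'a::ab_group_add set \<Rightarrow> 'a set \<Rightarrow> 'a \<Rightarrow> 'a" where
  "proj Gm Gp x = (THE m. m \<in> Gm \<and> x - m \<in> Gp)"

definition Pbar :: "'a::ab_group_add set \<Rightarrow> 'a set \<Rightarrow> 'a fps2 \<Rightarrow> 'a fps2" where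
  "Pbar Gm Gp f = (\<lambda>i j. proj Gm Gp (f i j))"

definition Ptbar :: "'a::ab_group_add set \<Rightarrow> 'a set \<Rightarrow> 'a fps2 \<Rightarrow> 'a fps2" where
  "Ptbar Gm Gp f = (\<lambda>i j. f i j - proj Gm Gp (f i j))"

definition gbar :: "'a set \<Rightarrow> 'a fps2 set" where
  "gbar G = {f. \<forall>i j. f i j \<in> G}"

definition gbar1 :: "'a::zero set \<Rightarrow> 'a fps2 set" where
  "gbar1 G = {f \<in> gbar G. f 0 0 = 0}"

definition sG :: "'a::zero set \<Rightarrow> 'a fps2 set" where
  "sG S = {f. \<forall>i j. f i j \<in> S \<and> (i = 0 \<longrightarrow> f i j = 0)}"

definition tG :: "'a::zero set \<Rightarrow> 'a fps2 set" where
  "tG S = {f. \<forall>i j. f i j \<in> S \<and> (j = 0 \<longrightarrow> f i j = 0)}"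

definition Vset :: "'a::ab_group_add set \<Rightarrow> 'a set \<Rightarrow> 'a fps2 set" where
  "Vset Gm Gp = {fadd a b | a b. a \<in> sG Gm \<and> b \<in> tG Gp}"

primrec chi_iter :: "('k::field_char_0 \<Rightarrow> 'a::ring_1 \<Rightarrow> 'a) \<Rightarrow> 'a set \<Rightarrow> 'a set \<Rightarrow> 'a fps2 \<Rightarrow> nat \<Rightarrow> 'a fps2" where
  "chi_iter sc Gm Gp a 0 = a"
| "chi_iter sc Gm Gp a (Suc n) =
     fsub a (BCH sc (Pbar Gm Gp (chi_iter sc Gm Gp a n)) (Ptbar Gm Gp (chi_iter sc Gm Gp a n)))"

definition chi :: "('k::field_char_0 \<Rightarrow> 'a::ring_1 \<Rightarrow> 'a) \<Rightarrow> 'a set \<Rightarrow> 'a set \<Rightarrow> 'a fps2 \<Rightarrow> 'a fps2" where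
  "chi sc Gm Gp a = (\<lambda>i j. THE v. \<exists>N. \<forall>n\<ge>N. chi_iter sc Gm Gp a n i j = v)"

definition DP :: "('k::field_char_0 \<Rightarrow> 'a::ring_1 \<Rightarrow> 'a) \<Rightarrow> 'a set \<Rightarrow> 'a set \<Rightarrow> 'a fps2 \<Rightarrow> 'a fps2 \<times> 'a fps2" where
  "DP sc Gm Gp v = (Pbar Gm Gp (chi sc Gm Gp v), Ptbar Gm Gp (chi sc Gm Gp v))"

definition Psi :: "('k::field_char_0 \<Rightarrow> 'a::ring_1 \<Rightarrow> 'a) \<Rightarrow> 'a set \<Rightarrow> 'a set \<Rightarrow> 'a fps2 \<times> 'a fps2 \<Rightarrow> 'a fps2 \<times> 'a fps2" where
  "Psi sc Gm Gp p = DP sc Gm Gp (Cmap sc (fst p) (snd p))"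

end

theory Submission
  imports Defs "HOL-Computational_Algebra.Formal_Power_Series"
begin
unbundle fps_syntax


definition lamF :: "nat \<Rightarrow> 'k::field_char_0" where "lamF n = (-1)^n / fact (Suc n)"
definition muC :: "nat \<Rightarrow> 'k::field_char_0" where "muC n = (-1)^n / fact n"
definition cL :: "(nat \<Rightarrow> 'k::field_char_0) \<Rightarrow> nat \<Rightarrow> nat \<Rightarrow> 'k" where
  "cL l a b = l (a + b) * ((-1)^b * of_nat ((a + b) choose a))"
definition conv :: "(nat \<Rightarrow> nat \<Rightarrow> 'k::field_char_0) \<Rightarrow> nat \<Rightarrow> nat \<Rightarrow> 'k" where
  "conv c a b = (\<Sum>p\<le>a. c (a - p) b * inverse (fact p))"

lemma sum_atMost_rev: "(\<Sum>p\<le>(i::nat). g p) = (\<Sum>p\<le>i. g (i - p))"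
  by (rule sum.reindex_bij_witness[where i="\<lambda>p. i - p" and j="\<lambda>p. i - p"]) auto

lemma choose_fact_k: "of_nat ((k + b) choose k) = (fact (k + b) / (fact k * fact b) :: 'k::field_char_0)"
  using binomial_fact[of k "k + b"] by simp

lemma cL_mu: "cL muC k b = ((-1)^k / (fact k * fact b) :: 'k::field_char_0)"
proof -
  have "cL muC k b = ((-1)^(k+b) * (-1)^b) * (of_nat ((k + b) choose k) / fact (k + b) :: 'k)"
    by (simp add: cL_def muC_def field_simps)
  also have "(-1)^(k+b) * (-1)^b = ((-1)^k :: 'k)"
  proof -
    have "(-1::'k)^(b+b) = 1" by (simp add: mult_2[symmetric] power_mult)
    then show ?thesis by (simp add: power_add mult.assoc)
  qed
  also have "of_nat ((k + b) choose k) / fact (k + b) = (1 / (fact k * fact b) :: 'k)"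
    by (simp add: choose_fact_k)
  finally show ?thesis by simp
qed

lemma conv_mu: "conv (cL muC) a b = (if a = 0 then inverse (fact b) else (0::'k::field_char_0))"
proof -
  have "conv (cL muC) a b = (\<Sum>p\<le>a. (-1)^(a-p) / (fact (a-p) * fact b) * inverse (fact p) :: 'k)"
    by (simp add: conv_def cL_mu)
  also have "\<dots> = (\<Sum>p\<le>a. of_nat (a choose p) * (-1)^(a-p)) / (fact a * fact b)"
    unfolding sum_divide_distrib
  proof (rule sum.cong[OF refl])
    fix p assume "p \<in> {..a}"
    then have pa: "p \<le> a" by simp
    have "of_nat (a choose p) = (fact a / (fact p * fact (a - p)) :: 'k)" using binomial_fact[OF pa] by simp
    then show "(-1)^(a-p) / (fact (a-p) * fact b) * inverse (fact p) =
        of_nat (a choose p) * (-1)^(a-p) / (fact a * fact b :: 'k)"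
      by (simp add: field_simps)
  qed
  also have "(\<Sum>p\<le>a. of_nat (a choose p) * (-1)^(a-p)) = ((1 + (-1)) ^ a :: 'k)"
    using binomial_ring[of "1::'k" "-1" a] by simp
  finally show ?thesis by (cases "a = 0") (simp_all add: inverse_eq_divide)
qed

lemma cL_lam: "cL lamF k b = ((-1)^k * of_nat ((k + b) choose k) / fact (k + b + 1) :: 'k::field_char_0)"
proof -
  have "(-1)^(k+b) * (-1)^b = ((-1)^k :: 'k)"
  proof -
    have "(-1::'k)^(b+b) = 1" by (simp add: mult_2[symmetric] power_mult)
    then show ?thesis by (simp add: power_add mult.assoc)
  qed
  then show ?thesis by (simp add: cL_def lamF_def field_simps)
qed

lemma field_aux: "F1 \<noteq> 0 \<Longrightarrow> F2 \<noteq> 0 \<Longrightarrow> F3 \<noteq> 0 \<Longrightarrow> X / F3 * inverse F2 = X * (F1 / (F2 * F3)) / (F1::'k::field)"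
  by (simp add: field_simps)

lemma conv_lam: "conv (cL lamF) a b = (inverse (fact (a + b + 1)) :: 'k::field_char_0)"
proof -
  have "conv (cL lamF) a b = (\<Sum>k\<le>a. cL lamF k b * inverse (fact (a - k)) :: 'k)"
    unfolding conv_def by (subst sum_atMost_rev) (simp add: diff_diff_cancel)
  also have "\<dots> = (\<Sum>k\<le>a. ((-1)^k * of_nat ((k + b) choose k)) * of_nat ((a + b + 1) choose (a - k))) / fact (a + b + 1)"
    unfolding sum_divide_distrib
  proof (rule sum.cong[OF refl])
    fix k assume "k \<in> {..a}"
    then have ka: "k \<le> a" by simp
    have e: "a + b + 1 - (a - k) = k + b + 1" using ka by simp
    have "of_nat ((a + b + 1) choose (a - k)) = (fact (a + b + 1) / (fact (a - k) * fact (a + b + 1 - (a - k))) :: 'k)"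
      by (rule binomial_fact) (use ka in simp)
    then have "of_nat ((a + b + 1) choose (a - k)) = (fact (a + b + 1) / (fact (a - k) * fact (k + b + 1)) :: 'k)"
      unfolding e .
    moreover have "cL lamF k b = ((-1)^k * of_nat ((k + b) choose k)) / (fact (k + b + 1) :: 'k)"
      by (simp add: cL_lam)
    ultimately show "cL lamF k b * inverse (fact (a - k)) =
      ((-1)^k * of_nat ((k + b) choose k)) * of_nat ((a + b + 1) choose (a - k)) / (fact (a + b + 1) :: 'k)"
      using field_aux[OF fact_nonzero fact_nonzero fact_nonzero] by metis
  qed
  also have "(\<Sum>k\<le>a. ((-1)^k * of_nat ((k + b) choose k)) * of_nat ((a + b + 1) choose (a - k)))
      = (\<Sum>k\<le>a. ((- of_nat (b + 1)) gchoose k) * ((of_nat (a + b + 1)) gchoose (a - k)) :: 'k)"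
  proof (rule sum.cong[OF refl])
    fix k
    have "((- of_nat (b + 1)) gchoose k) = ((-1)^k * ((of_nat k - (- of_nat (b+1)) - 1) gchoose k) :: 'k)"
      by (rule gbinomial_negated_upper)
    also have "(of_nat k - (- of_nat (b+1)) - 1 :: 'k) = of_nat (k + b)" by simp
    finally show "((-1)^k * of_nat ((k + b) choose k)) * of_nat ((a + b + 1) choose (a - k)) =
       (((- of_nat (b + 1)) gchoose k) * ((of_nat (a + b + 1)) gchoose (a - k)) :: 'k)"
      by (simp add: binomial_gbinomial)
  qed
  also have "\<dots> = ((- of_nat (b + 1) + of_nat (a + b + 1)) gchoose a :: 'k)"
    using gbinomial_Vandermonde[of "- of_nat (b + 1) :: 'k" "of_nat (a + b + 1)" a]
    by (simp add: atLeast0AtMost)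
  also have "(- of_nat (b + 1) + of_nat (a + b + 1) :: 'k) = of_nat a" by simp
  also have "(of_nat a gchoose a :: 'k) = 1" by (simp flip: binomial_gbinomial)
  finally show ?thesis by (simp add: divide_inverse)
qed




section \<open>Two-variable power series ring\<close>

lemma mult2_nth: "((F::'a::ring_1 fps fps) * G) $ i $ j = (\<Sum>p\<le>i. \<Sum>q\<le>j. F$p$q * G$(i-p)$(j-q))"
  by (simp add: fps_mult_nth fps_sum_nth atLeast0AtMost)

definition high :: "nat \<Rightarrow> 'a::ring_1 fps fps \<Rightarrow> bool" where
  "high d F \<longleftrightarrow> (\<forall>i j. i + j < d \<longrightarrow> F$i$j = 0)"

lemma high_0[simp]: "high 0 F" by (simp add: high_def)
lemma high_zero[simp]: "high d 0" by (simp add: high_def)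
lemma high_mono: "d \<le> e \<Longrightarrow> high e F \<Longrightarrow> high d F" by (auto simp: high_def)
lemma high_add: "high d F \<Longrightarrow> high d G \<Longrightarrow> high d (F + G)" by (simp add: high_def)
lemma high_uminus: "high d F \<Longrightarrow> high d (- F)" by (simp add: high_def)
lemma high_diff: "high d F \<Longrightarrow> high d G \<Longrightarrow> high d (F - G)" by (simp add: high_def fps_sub_nth)
lemma high_sum: "(\<And>x. x \<in> S \<Longrightarrow> high d (f x)) \<Longrightarrow> high d (sum f S)"
  by (induct S rule: infinite_finite_induct) (auto intro: high_add)

lemma high_mult: assumes "high d F" "high e G" shows "high (d + e) (F * G)"
  unfolding high_def
proof (intro allI impI)
  fix i j assume ij: "i + j < d + e"
  have "F$p$q * G$(i-p)$(j-q) = 0" if "p \<le> i" "q \<le> j" for p q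
  proof (cases "p + q < d")
    case True then show ?thesis using assms(1) by (simp add: high_def)
  next
    case False then have "(i-p) + (j-q) < e" using ij that by linarith
    then show ?thesis using assms(2) by (simp add: high_def)
  qed
  then show "(F * G) $ i $ j = 0" by (simp add: mult2_nth)
qed

lemma high_mult_left: "high d G \<Longrightarrow> high d (F * G)"
  using high_mult[of 0 F d G] by simp
lemma high_mult_right: "high d F \<Longrightarrow> high d (F * G)"
  using high_mult[of d F 0 G] by simp

lemma high_power: "high 1 F \<Longrightarrow> high n (F ^ n)"
proof (induct n)
  case (Suc n) then show ?case using high_mult[of 1 F n "F^n"] by simp
qed simp

lemma high1_iff: "high 1 W \<longleftrightarrow> W $ 0 $ 0 = 0" by (simp add: high_def)
lemma high_Suc0[simp]: "high (Suc 0) W \<longleftrightarrow> W $ 0 $ 0 = 0" by (simp add: high_def)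

definition cong2 :: "nat \<Rightarrow> 'a::ring_1 fps fps \<Rightarrow> 'a fps fps \<Rightarrow> bool" where
  "cong2 d F G \<longleftrightarrow> high d (F - G)"

lemma cong2_refl[simp]: "cong2 d F F" by (simp add: cong2_def)
lemma cong2_sym: "cong2 d F G \<Longrightarrow> cong2 d G F"
  unfolding cong2_def using high_uminus by fastforce
lemma cong2_trans: "cong2 d F G \<Longrightarrow> cong2 d G H \<Longrightarrow> cong2 d F H"
  unfolding cong2_def using high_add by fastforce
lemma cong2_mono: "d \<le> e \<Longrightarrow> cong2 e F G \<Longrightarrow> cong2 d F G"
  unfolding cong2_def using high_mono by blast
lemma cong2_add: "cong2 d F F' \<Longrightarrow> cong2 d G G' \<Longrightarrow> cong2 d (F + G) (F' + G')"
  unfolding cong2_def using high_add by (fastforce simp: algebra_simps)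
lemma cong2_diff: "cong2 d F F' \<Longrightarrow> cong2 d G G' \<Longrightarrow> cong2 d (F - G) (F' - G')"
  unfolding cong2_def using high_diff by (fastforce simp: algebra_simps)
lemma cong2_uminus: "cong2 d F F' \<Longrightarrow> cong2 d (- F) (- F')"
  unfolding cong2_def using high_uminus by (fastforce simp: algebra_simps)
lemma cong2_sum: "(\<And>x. x \<in> S \<Longrightarrow> cong2 d (f x) (g x)) \<Longrightarrow> cong2 d (sum f S) (sum g S)"
  by (induct S rule: infinite_finite_induct) (auto intro: cong2_add)
lemma cong2_mult_gen: "cong2 d F F' \<Longrightarrow> cong2 e G G' \<Longrightarrow> high a F' \<Longrightarrow> high b G \<Longrightarrow>
   cong2 (min (d + b) (a + e)) (F * G) (F' * G')"
proof -
  assume h: "cong2 d F F'" "cong2 e G G'" "high a F'" "high b G"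
  have "F * G - F' * G' = (F - F') * G + F' * (G - G')" by (simp add: algebra_simps)
  moreover have "high (d + b) ((F - F') * G)" using h by (simp add: cong2_def high_mult)
  moreover have "high (a + e) (F' * (G - G'))" using h by (simp add: cong2_def high_mult)
  ultimately show ?thesis unfolding cong2_def
    using high_mono[OF min.cobounded1] high_mono[OF min.cobounded2] high_add by metis
qed
lemma cong2_mult: "cong2 d F F' \<Longrightarrow> cong2 d G G' \<Longrightarrow> cong2 d (F * G) (F' * G')"
  using cong2_mult_gen[of d F F' d G G' 0 0] by simp
lemma cong2_high: "cong2 d F G \<Longrightarrow> high d G \<Longrightarrow> high d F"
  unfolding cong2_def using high_add by fastforce
lemma cong2_nth: "cong2 d F G \<Longrightarrow> i + j < d \<Longrightarrow> F$i$j = G$i$j"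
  unfolding cong2_def high_def by (simp add: fps_sub_nth)
lemma cong2_eqI: "(\<And>d. cong2 d F G) \<Longrightarrow> F = G"
  by (rule fps_ext, rule fps_ext) (metis cong2_nth less_add_Suc1)
lemma high_cong2_0: "high d F \<longleftrightarrow> cong2 d F 0" by (simp add: cong2_def)

lemma cong2_power: assumes "cong2 d F F'" "high 1 F" "high 1 F'" "n \<ge> 1"
  shows "cong2 (d + n - 1) (F ^ n) (F' ^ n)"
  using assms(4)
proof (induct n)
  case (Suc n)
  show ?case
  proof (cases "n = 0")
    case True then show ?thesis using assms(1) by simp
  next
    case False
    then have ih: "cong2 (d + n - 1) (F ^ n) (F' ^ n)" using Suc by simp
    have "cong2 (min (d + n) (1 + (d + n - 1))) (F * F ^ n) (F' * F' ^ n)"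
      by (rule cong2_mult_gen[OF assms(1) ih assms(3) high_power[OF assms(2)]])
    moreover have "min (d + n) (1 + (d + n - 1)) = d + Suc n - 1" using False by simp
    ultimately show ?thesis by (simp only: power_Suc)
  qed
qed simp

lemma cong2_power_any: "cong2 d F F' \<Longrightarrow> cong2 d (F ^ n) (F' ^ n)"
  by (induct n) (simp_all add: cong2_mult)

lemma tri2: "(\<Sum>i\<le>n. \<Sum>j\<le>n-i. g i j) = (\<Sum>k\<le>(n::nat). \<Sum>i\<le>k. g i (k - i))"
proof -
  have e: "{(i,j). i+j \<le> n} = Sigma {..n} (\<lambda>i. {..n-i})" by auto
  have "(\<Sum>i\<le>n. \<Sum>j\<le>n-i. g i j) = (\<Sum>(i,j)\<in>Sigma {..n} (\<lambda>i. {..n-i}). g i j)"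
    by (rule sum.Sigma) auto
  also have "\<dots> = (\<Sum>(i,j)\<in>{(i,j). i+j \<le> n}. g i j)" using e by simp
  also have "\<dots> = (\<Sum>k\<le>n. \<Sum>i\<le>k. g i (k - i))" by (rule sum.triangle_reindex_eq)
  finally show ?thesis .
qed

lemma sum_atMost_restrict: "(M::nat) \<le> M' \<Longrightarrow> (\<Sum>n\<le>M. f n) = (\<Sum>n\<le>M'. if n \<le> M then f n else 0)"
proof -
  assume "M \<le> M'"
  then have "{..M'} \<inter> {n. n \<le> M} = {..M}" by (auto intro: order_trans)
  moreover have "(\<Sum>n\<le>M'. if n \<le> M then f n else 0) = sum f ({..M'} \<inter> {n. n \<le> M})"
    by (simp add: sum.inter_restrict)
  ultimately show ?thesis by simp
qed

lemma cong2_sum_if: "(\<And>x. x \<in> S \<Longrightarrow> \<not> P x \<Longrightarrow> high d (f x)) \<Longrightarrow>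
   cong2 d (\<Sum>x\<in>S. f x) (\<Sum>x\<in>S. if P x then f x else 0)"
  by (rule cong2_sum) (auto simp: cong2_def)

definition SER :: "(nat \<Rightarrow> 'a::ring_1 fps fps) \<Rightarrow> 'a fps fps" where
  "SER f = Abs_fps (\<lambda>i. Abs_fps (\<lambda>j. (\<Sum>n\<le>i+j. f n) $ i $ j))"

lemma SER_nth: "SER f $ i $ j = (\<Sum>n\<le>i+j. f n) $ i $ j" by (simp add: SER_def)

lemma SER_nth_M: assumes "\<And>n. high n (f n)" "i + j \<le> M"
  shows "SER f $ i $ j = (\<Sum>n\<le>M. f n) $ i $ j"
proof -
  have "cong2 (Suc (i+j)) (\<Sum>n\<le>M. f n) (\<Sum>n\<le>M. if n \<le> i + j then f n else 0)"
    by (intro cong2_sum_if) (auto intro: high_mono[OF _ assms(1)])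
  then have "(\<Sum>n\<le>M. f n) $ i $ j = (\<Sum>n\<le>M. if n \<le> i + j then f n else 0) $ i $ j"
    using cong2_nth by blast
  then show ?thesis using sum_atMost_restrict[OF assms(2), of f] by (simp add: SER_nth)
qed

lemma SER_cong: assumes h: "\<And>n. high n (f n)" shows "cong2 (Suc M) (SER f) (\<Sum>n\<le>M. f n)"
  unfolding cong2_def high_def by (auto simp: fps_sub_nth SER_nth_M[OF h])

lemma SER_resp: "(\<And>n. cong2 d (f n) (g n)) \<Longrightarrow> cong2 d (SER f) (SER g)"
  unfolding cong2_def high_def by (auto simp: fps_sub_nth SER_nth fps_sum_nth sum_subtractf[symmetric])

lemma high_SER: assumes h: "\<And>n. high d (f n)" shows "high d (SER f)"
  unfolding high_def
proof (intro allI impI)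
  fix i j assume "i + j < d"
  then have "f n $ i $ j = 0" for n using h[of n] by (simp add: high_def)
  then show "SER f $ i $ j = 0" by (simp add: SER_nth fps_sum_nth)
qed

lemma SER_const: "SER (\<lambda>n. if n = 0 then B else 0) = B"
  by (rule fps_ext, rule fps_ext) (simp add: SER_nth)

lemma SER_shift: assumes "f 0 = 0" "\<And>n. high n (f n)"
  shows "SER f = SER (\<lambda>n. f (Suc n))"
proof (rule cong2_eqI)
  fix d
  have h2: "high n (f (Suc n))" for n using assms(2)[of "Suc n"] high_mono[of n "Suc n"] by simp
  have "cong2 (Suc (Suc d)) (SER f) (\<Sum>n\<le>Suc d. f n)" by (rule SER_cong[OF assms(2)])
  then have c1: "cong2 (Suc d) (SER f) (\<Sum>n\<le>Suc d. f n)" using cong2_mono le_SucI by blast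
  have c2: "cong2 (Suc d) (SER (\<lambda>n. f (Suc n))) (\<Sum>n\<le>d. f (Suc n))" by (rule SER_cong[OF h2])
  have "(\<Sum>n\<le>Suc d. f n) = (\<Sum>n\<le>d. f (Suc n))" by (simp only: sum.atMost_Suc_shift) (simp add: assms(1))
  then have "cong2 (Suc d) (SER f) (SER (\<lambda>n. f (Suc n)))" using c1 c2 by (metis cong2_sym cong2_trans)
  then show "cong2 d (SER f) (SER (\<lambda>n. f (Suc n)))" using cong2_mono le_SucI by blast
qed

lemma SER_add: "SER (\<lambda>n. f n + g n) = SER f + SER g"
  by (rule fps_ext, rule fps_ext) (simp add: SER_nth sum.distrib)

lemma SER_mult: assumes hf: "\<And>n. high n (f n)" and hg: "\<And>n. high n (g n)"
  shows "SER f * SER g = SER (\<lambda>n. \<Sum>k\<le>n. f k * g (n - k))"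
proof (rule cong2_eqI)
  fix d
  have hh: "high n (\<Sum>k\<le>n. f k * g (n - k))" for n
    by (rule high_sum) (metis hf hg high_mult le_add_diff_inverse atMost_iff)
  have c1: "cong2 (Suc d) (SER f * SER g) ((\<Sum>k\<le>d. f k) * (\<Sum>m\<le>d. g m))"
    by (intro cong2_mult SER_cong hf hg)
  have "(\<Sum>k\<le>d. f k) * (\<Sum>m\<le>d. g m) = (\<Sum>k\<le>d. \<Sum>m\<le>d. f k * g m)"
    by (rule sum_product)
  moreover have "cong2 (Suc d) (\<Sum>k\<le>d. \<Sum>m\<le>d. f k * g m) (\<Sum>k\<le>d. \<Sum>m\<le>d. if m \<le> d - k then f k * g m else 0)"
  proof (rule cong2_sum, rule cong2_sum_if)
    fix k m assume "k \<in> {..d}" "\<not> m \<le> d - k"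
    then have "Suc d \<le> k + m" by auto
    then show "high (Suc d) (f k * g m)" using high_mult[OF hf hg, of k m] high_mono by blast
  qed
  moreover have "(\<Sum>k\<le>d. \<Sum>m\<le>d. if m \<le> d - k then f k * g m else 0) = (\<Sum>k\<le>d. \<Sum>m\<le>d-k. f k * g m)"
    by (intro sum.cong refl sum_atMost_restrict[symmetric]) simp
  moreover have "\<dots> = (\<Sum>n\<le>d. \<Sum>k\<le>n. f k * g (n - k))" by (rule tri2)
  ultimately have c3: "cong2 (Suc d) (SER f * SER g) (\<Sum>n\<le>d. \<Sum>k\<le>n. f k * g (n - k))"
    using c1 cong2_trans by simp
  have c4: "cong2 (Suc d) (SER (\<lambda>n. \<Sum>k\<le>n. f k * g (n - k))) (\<Sum>n\<le>d. \<Sum>k\<le>n. f k * g (n - k))"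
    by (rule SER_cong[OF hh])
  have "cong2 (Suc d) (SER f * SER g) (SER (\<lambda>n. \<Sum>k\<le>n. f k * g (n - k)))"
    using c3 cong2_sym[OF c4] by (rule cong2_trans)
  then show "cong2 d (SER f * SER g) (SER (\<lambda>n. \<Sum>k\<le>n. f k * g (n - k)))"
    using cong2_mono[of d "Suc d"] by simp
qed

definition ER :: "'a::ring_1 fps fps \<Rightarrow> 'a fps fps" where
  "ER F = Abs_fps (\<lambda>i. Abs_fps (\<lambda>j. of_nat (i + j) * F $ i $ j))"

lemma ER_nth[simp]: "ER F $ i $ j = of_nat (i + j) * F $ i $ j" by (simp add: ER_def)
lemma ER_add: "ER (F + G) = ER F + ER G" by (rule fps_ext, rule fps_ext) (simp add: distrib_left)
lemma ER_diff: "ER (F - G) = ER F - ER G" by (rule fps_ext, rule fps_ext) (simp add: fps_sub_nth algebra_simps)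
lemma ER_uminus: "ER (- F) = - ER F" by (rule fps_ext, rule fps_ext) simp
lemma ER_zero[simp]: "ER 0 = 0" by (rule fps_ext, rule fps_ext) simp
lemma ER_one[simp]: "ER 1 = 0" by (rule fps_ext, rule fps_ext) simp
lemma ER_sum: "ER (sum f S) = (\<Sum>x\<in>S. ER (f x))"
  by (rule fps_ext, rule fps_ext) (simp add: fps_sum_nth sum_distrib_left)
lemma ER_high1[simp]: "high 1 (ER F)" by (simp add: high1_iff)
lemma ER_high: "high d F \<Longrightarrow> high d (ER F)" by (simp add: high_def)
lemma ER_cong: "cong2 d F G \<Longrightarrow> cong2 d (ER F) (ER G)" by (simp add: cong2_def ER_high ER_diff[symmetric])
lemma ER_SER: "ER (SER f) = SER (\<lambda>n. ER (f n))"
  by (rule fps_ext, rule fps_ext) (simp add: SER_nth fps_sum_nth sum_distrib_left)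

lemma ER_mult: "ER (F * G) = ER F * G + F * ER G"
proof (rule fps_ext, rule fps_ext)
  fix i j
  have "of_nat (i + j) * (F $ p $ q * G $ (i - p) $ (j - q)) =
        of_nat (p + q) * F $ p $ q * G $ (i - p) $ (j - q) + F $ p $ q * (of_nat (i - p + (j - q)) * G $ (i - p) $ (j - q))"
    if "p \<le> i" "q \<le> j" for p q
  proof -
    have "of_nat (i + j) = (of_nat (p + q) + of_nat (i - p + (j - q)) :: 'a)" using that by (simp flip: of_nat_add)
    then show ?thesis by (simp add: algebra_simps mult_of_nat_commute)
  qed
  then show "ER (F * G) $ i $ j = (ER F * G + F * ER G) $ i $ j"
    by (simp add: mult2_nth sum_distrib_left sum.distrib[symmetric] mult.assoc)
qed

lemma ER_power: "ER (W ^ Suc n) = (\<Sum>a\<le>n. W ^ a * ER W * W ^ (n - a))"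
proof (induct n)
  case 0 then show ?case by simp
next
  case (Suc n)
  have "ER (W ^ Suc (Suc n)) = ER W * W ^ Suc n + W * ER (W ^ Suc n)"
    by (simp add: ER_mult)
  also have "\<dots> = ER W * W ^ Suc n + (\<Sum>a\<le>n. W ^ Suc a * ER W * W ^ (n - a))"
    using Suc by (simp add: sum_distrib_left mult.assoc)
  also have "\<dots> = (\<Sum>a\<le>Suc n. W ^ a * ER W * W ^ (Suc n - a))"
    by (subst sum.atMost_Suc_shift) simp
  finally show ?case .
qed

locale kalg_loc =
  fixes sc :: "'k::field_char_0 \<Rightarrow> 'a::ring_1 \<Rightarrow> 'a"
  assumes kalg: "kalg sc"
begin

definition kap :: "'k \<Rightarrow> 'a" where "kap c = sc c 1"

lemma sc_add_l: "sc (a + b) x = sc a x + sc b x" using kalg unfolding kalg_def by blast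
lemma sc_add_r: "sc a (x + y) = sc a x + sc a y" using kalg unfolding kalg_def by blast
lemma sc_mult_s: "sc (a * b) x = sc a (sc b x)" using kalg unfolding kalg_def by blast
lemma sc_one: "sc 1 x = x" using kalg unfolding kalg_def by blast
lemma sc_ml: "sc a (x * y) = sc a x * y" using kalg unfolding kalg_def by blast
lemma sc_mr: "sc a (x * y) = x * sc a y" using kalg unfolding kalg_def by blast

lemma sc_eq: "sc c x = kap c * x"
  unfolding kap_def by (metis sc_ml mult_1_left)
lemma kap_central: "kap c * x = x * kap c"
  unfolding kap_def by (metis sc_eq sc_mr mult_1_right kap_def)
lemma kap_add: "kap (a + b) = kap a + kap b" unfolding kap_def by (rule sc_add_l)
lemma kap_mult: "kap (a * b) = kap a * kap b" unfolding kap_def by (metis sc_mult_s sc_eq kap_def)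
lemma kap_one[simp]: "kap 1 = 1" unfolding kap_def by (rule sc_one)
lemma kap_zero[simp]: "kap 0 = 0" using kap_add[of 0 0] by simp
lemma kap_uminus: "kap (- a) = - kap a"
  by (rule minus_unique[symmetric]) (simp add: kap_add[symmetric])
lemma kap_diff: "kap (a - b) = kap a - kap b" using kap_add[of a "-b"] kap_uminus by simp
lemma kap_of_nat[simp]: "kap (of_nat n) = of_nat n"
  by (induct n) (simp_all add: kap_add)
lemma kap_sum: "kap (sum f S) = sum (\<lambda>x. kap (f x)) S"
  by (induct S rule: infinite_finite_induct) (simp_all add: kap_add)
lemma kap_inv_nat: "n > 0 \<Longrightarrow> kap (inverse (of_nat n)) * of_nat n = 1"
proof -
  assume "n > 0"
  then have "inverse (of_nat n :: 'k) * of_nat n = 1" by simp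
  then show ?thesis by (metis kap_mult kap_of_nat kap_one)
qed


definition k2 :: "'k \<Rightarrow> 'a fps fps" where "k2 c = fps_const (fps_const (kap c))"

lemma k2_mult_nth[simp]: "(k2 c * F) $ i $ j = kap c * F $ i $ j"
  by (simp add: k2_def)
lemma k2_mult_nth'[simp]: "(F * k2 c) $ i $ j = F $ i $ j * kap c"
  by (simp add: k2_def)
lemma k2_central: "k2 c * F = F * k2 c"
  by (rule fps_ext, rule fps_ext) (simp add: kap_central)
lemma k2_add: "k2 (a + b) = k2 a + k2 b" by (simp add: k2_def kap_add)
lemma k2_mult: "k2 (a * b) = k2 a * k2 b" by (simp add: k2_def kap_mult)
lemma k2_one[simp]: "k2 1 = 1" by (simp add: k2_def)
lemma k2_zero[simp]: "k2 0 = 0" by (simp add: k2_def)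
lemma k2_of_nat[simp]: "k2 (of_nat n) = of_nat n" by (simp add: k2_def fps_of_nat)
lemma k2_uminus: "k2 (- a) = - k2 a" by (simp add: k2_def kap_uminus)
lemma k2_diff: "k2 (a - b) = k2 a - k2 b" by (simp add: k2_def kap_diff)
lemma k2_sum: "k2 (sum f S) = sum (\<lambda>x. k2 (f x)) S"
  by (induct S rule: infinite_finite_induct) (simp_all add: k2_add)
lemma k2_assoc: "k2 a * (k2 b * F) = k2 (a * b) * F" by (simp add: k2_mult mult.assoc)
lemma high_k2: "high d F \<Longrightarrow> high d (k2 c * F)" by (rule high_mult_left)
lemma cong2_k2: "cong2 d F G \<Longrightarrow> cong2 d (k2 c * F) (k2 c * G)"
  by (simp add: cong2_mult)

definition expM :: "nat \<Rightarrow> 'a fps fps \<Rightarrow> 'a fps fps" where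
  "expM M W = (\<Sum>n\<le>M. k2 (inverse (fact n)) * W ^ n)"

definition EXP :: "'a fps fps \<Rightarrow> 'a fps fps" where
  "EXP W = Abs_fps (\<lambda>i. Abs_fps (\<lambda>j. expM (i + j) W $ i $ j))"


lemma expM_cong: assumes "high 1 W" "M \<le> M'" shows "cong2 (Suc M) (expM M' W) (expM M W)"
proof -
  have "expM M W = (\<Sum>n\<le>M'. if n \<le> M then k2 (inverse (fact n)) * W ^ n else 0)"
    unfolding expM_def by (rule sum_atMost_restrict[OF assms(2)])
  moreover have "cong2 (Suc M) (k2 (inverse (fact n)) * W ^ n) (if n \<le> M then k2 (inverse (fact n)) * W ^ n else 0)" for n
  proof (cases "n \<le> M")
    case False
    then have "high (Suc M) (W ^ n)" using high_power[OF assms(1), of n] high_mono[of "Suc M" n] by simp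
    then show ?thesis using False by (simp add: high_cong2_0[symmetric] high_k2)
  qed simp
  ultimately show ?thesis unfolding expM_def by (simp add: cong2_sum)
qed

lemma EXP_nth: "high 1 W \<Longrightarrow> i + j \<le> M \<Longrightarrow> EXP W $ i $ j = expM M W $ i $ j"
  unfolding EXP_def using expM_cong[of W "i+j" M] cong2_nth by fastforce

lemma EXP_cong: assumes "high 1 W" shows "cong2 (Suc M) (EXP W) (expM M W)"
  unfolding cong2_def high_def by (auto simp: fps_sub_nth EXP_nth[OF assms])

lemma expM_zero: "expM M 0 = 1"
  by (induct M) (simp_all add: expM_def)
lemma EXP_zero[simp]: "EXP 0 = 1"
  by (rule fps_ext, rule fps_ext) (simp add: EXP_def expM_zero)

lemma EXP_00[simp]: "EXP W $ 0 $ 0 = 1"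
  by (simp add: EXP_def expM_def)

lemma expM_resp: "cong2 d W W' \<Longrightarrow> cong2 d (expM M W) (expM M W')"
  unfolding expM_def by (intro cong2_sum cong2_k2 cong2_power_any)

lemma EXP_resp: assumes "high 1 W" "high 1 W'" "cong2 d W W'" shows "cong2 d (EXP W) (EXP W')"
proof -
  have "cong2 d (EXP W) (expM d W)" using EXP_cong[OF assms(1), of d] cong2_mono by (metis le_SucI order_refl)
  moreover have "cong2 d (EXP W') (expM d W')" using EXP_cong[OF assms(2), of d] cong2_mono by (metis le_SucI order_refl)
  ultimately show ?thesis using expM_resp[OF assms(3)] by (meson cong2_sym cong2_trans)
qed

lemma expM_minus: "expM (Suc d) W - W = (\<Sum>n\<le>Suc d. if n = 1 then 0 else k2 (inverse (fact n)) * W ^ n)"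
proof -
  have "expM (Suc d) W = (\<Sum>n\<le>Suc d. (if n = 1 then 0 else k2 (inverse (fact n)) * W ^ n)
      + (if n = 1 then k2 (inverse (fact n)) * W ^ n else 0))"
    unfolding expM_def by (rule sum.cong) auto
  also have "\<dots> = (\<Sum>n\<le>Suc d. if n = 1 then 0 else k2 (inverse (fact n)) * W ^ n) + W"
    by (simp add: sum.distrib)
  finally show ?thesis by simp
qed

lemma EXP_resp1: assumes "high 1 W" "high 1 W'" "cong2 d W W'"
  shows "cong2 (Suc d) (EXP W - W) (EXP W' - W')"
proof -
  have c1: "cong2 (Suc d) (EXP W - W) (expM (Suc d) W - W)"
    using EXP_cong[OF assms(1), of "Suc d"] cong2_mono[of "Suc d" "Suc (Suc d)"] cong2_diff by (metis cong2_refl le_SucI order_refl)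
  have c2: "cong2 (Suc d) (EXP W' - W') (expM (Suc d) W' - W')"
    using EXP_cong[OF assms(2), of "Suc d"] cong2_mono[of "Suc d" "Suc (Suc d)"] cong2_diff by (metis cong2_refl le_SucI order_refl)
  have "cong2 (Suc d) (if n = 1 then 0 else k2 (inverse (fact n)) * W ^ n)
     (if n = 1 then 0 else k2 (inverse (fact n)) * W' ^ n)" for n
  proof (cases "n = 0 \<or> n = 1")
    case False
    then have "cong2 (d + n - 1) (W ^ n) (W' ^ n)" using cong2_power[OF assms(3,1,2), of n] by simp
    moreover have "Suc d \<le> d + n - 1" using False by arith
    ultimately have "cong2 (Suc d) (W ^ n) (W' ^ n)" using cong2_mono by blast
    then show ?thesis using False by (simp add: cong2_k2)
  qed auto
  then have "cong2 (Suc d) (expM (Suc d) W - W) (expM (Suc d) W' - W')"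
    unfolding expM_minus by (intro cong2_sum) simp
  then show ?thesis using c1 c2 by (meson cong2_sym cong2_trans)
qed


lemma EXP_prod_resp: assumes "high 1 X" "high 1 X'" "high 1 Y" "high 1 Y'" "cong2 e X X'" "cong2 e Y Y'"
  shows "cong2 (Suc e) (EXP X * EXP Y - X - Y) (EXP X' * EXP Y' - X' - Y')"
proof -
  define X2 where "X2 = EXP X - 1 - X"
  define X2' where "X2' = EXP X' - 1 - X'"
  define Y2 where "Y2 = EXP Y - 1 - Y"
  define Y2' where "Y2' = EXP Y' - 1 - Y'"
  have cx: "cong2 (Suc e) X2 X2'" unfolding X2_def X2'_def
    using cong2_diff[OF EXP_resp1[OF assms(1,2,5)] cong2_refl[of "Suc e" 1]] by (simp add: algebra_simps)
  have cy: "cong2 (Suc e) Y2 Y2'" unfolding Y2_def Y2'_def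
    using cong2_diff[OF EXP_resp1[OF assms(3,4,6)] cong2_refl[of "Suc e" 1]] by (simp add: algebra_simps)
  have hx: "high 1 (X + X2)" "high 1 (X' + X2')" unfolding X2_def X2'_def using assms
    by (simp_all add: high1_iff fps_sub_nth)
  have hy: "high 1 (Y + Y2)" "high 1 (Y' + Y2')" unfolding Y2_def Y2'_def using assms
    by (simp_all add: high1_iff fps_sub_nth)
  have cxx: "cong2 e (X + X2) (X' + X2')" using cx assms(5) cong2_add cong2_mono by (metis le_SucI order_refl)
  have cyy: "cong2 e (Y + Y2) (Y' + Y2')" using cy assms(6) cong2_add cong2_mono by (metis le_SucI order_refl)
  have "cong2 (min (e + 1) (1 + e)) ((X + X2) * (Y + Y2)) ((X' + X2') * (Y' + Y2'))"
    by (rule cong2_mult_gen[OF cxx cyy hx(2) hy(1)])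
  then have cp: "cong2 (Suc e) ((X + X2) * (Y + Y2)) ((X' + X2') * (Y' + Y2'))" by simp
  have e1: "EXP X * EXP Y - X - Y = 1 + X2 + Y2 + (X + X2) * (Y + Y2)"
    unfolding X2_def Y2_def by (simp add: algebra_simps)
  have e2: "EXP X' * EXP Y' - X' - Y' = 1 + X2' + Y2' + (X' + X2') * (Y' + Y2')"
    unfolding X2'_def Y2'_def by (simp add: algebra_simps)
  show ?thesis unfolding e1 e2 by (intro cong2_add cx cy cp cong2_refl)
qed

definition isBCH :: "'a fps fps \<Rightarrow> 'a fps fps \<Rightarrow> 'a fps fps \<Rightarrow> bool" where
  "isBCH X Y Z \<longleftrightarrow> Z $ 0 $ 0 = 0 \<and> EXP X * EXP Y = EXP (X + Y + Z)"

lemma BCH_local: assumes "high 1 X" "high 1 X'" "high 1 Y" "high 1 Y'" "cong2 d X X'" "cong2 d Y Y'"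
  "isBCH X Y Z" "isBCH X' Y' Z'"
  shows "cong2 (Suc d) Z Z'"
proof -
  have "e \<le> Suc d \<Longrightarrow> cong2 e Z Z'" for e
  proof (induct e)
    case (Suc e)
    then have ce: "cong2 e Z Z'" and ed: "e \<le> d" by auto
    have cX: "cong2 e X X'" "cong2 e Y Y'" using assms(5,6) ed cong2_mono by blast+
    have hw: "high 1 (X + Y + Z)" "high 1 (X' + Y' + Z')" using assms by (simp_all add: high1_iff isBCH_def)
    have cw: "cong2 e (X + Y + Z) (X' + Y' + Z')" using cX ce by (intro cong2_add)
    have c1: "cong2 (Suc e) (EXP (X + Y + Z) - (X + Y + Z)) (EXP (X' + Y' + Z') - (X' + Y' + Z'))"
      by (rule EXP_resp1[OF hw cw])
    have c2: "cong2 (Suc e) (EXP X * EXP Y - X - Y) (EXP X' * EXP Y' - X' - Y')"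
      by (rule EXP_prod_resp[OF assms(1-4) cX])
    have "Z = (EXP X * EXP Y - X - Y) - (EXP (X + Y + Z) - (X + Y + Z))"
      using assms(7) by (simp add: isBCH_def algebra_simps)
    moreover have "Z' = (EXP X' * EXP Y' - X' - Y') - (EXP (X' + Y' + Z') - (X' + Y' + Z'))"
      using assms(8) by (simp add: isBCH_def algebra_simps)
    ultimately show ?case using cong2_diff[OF c2 c1] by simp
  qed (simp add: cong2_def)
  then show ?thesis by simp
qed

lemma BCH_unique: "high 1 X \<Longrightarrow> high 1 Y \<Longrightarrow> isBCH X Y Z \<Longrightarrow> isBCH X Y Z' \<Longrightarrow> Z = Z'"
  by (rule cong2_eqI, rule cong2_mono[OF le_SucI[OF order_refl]], rule BCH_local) auto

lemma EXP_inj: assumes "high 1 W" "high 1 W'" "EXP W = EXP W'" shows "W = W'"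
proof -
  have "isBCH W 0 0" using assms by (simp add: isBCH_def)
  moreover have "isBCH W 0 (W' - W)" using assms by (simp add: isBCH_def high1_iff fps_sub_nth)
  ultimately have "W' - W = 0" using BCH_unique[OF assms(1), of 0] by (metis high_zero)
  then show ?thesis by simp
qed

definition limR :: "(nat \<Rightarrow> 'b::ring_1 fps fps) \<Rightarrow> 'b fps fps" where
  "limR s = Abs_fps (\<lambda>i. Abs_fps (\<lambda>j. s (i + j) $ i $ j))"

lemma seq_cong_mono: assumes "\<And>k. cong2 (Suc k) (s (Suc k)) (s k)"
  shows "k \<le> m \<Longrightarrow> cong2 (Suc k) (s m) (s k)"
proof (induct m)
  case (Suc m)
  show ?case
  proof (cases "k = Suc m")
    case False
    then have "cong2 (Suc k) (s m) (s k)" using Suc by simp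
    moreover have "cong2 (Suc k) (s (Suc m)) (s m)" using assms[of m] cong2_mono[of "Suc k" "Suc m"] False Suc(2) by simp
    ultimately show ?thesis using cong2_trans by blast
  qed simp
qed simp

lemma limR_cong: assumes "\<And>k. cong2 (Suc k) (s (Suc k)) (s k)"
  shows "cong2 (Suc k) (limR s) (s k)"
  unfolding cong2_def high_def
proof (intro allI impI)
  fix i j assume "i + j < Suc k"
  then have "cong2 (Suc (i + j)) (s k) (s (i + j))" using seq_cong_mono[OF assms] by simp
  then have "s k $ i $ j = s (i + j) $ i $ j" using cong2_nth by blast
  then show "(limR s - s k) $ i $ j = 0" by (simp add: limR_def fps_sub_nth)
qed

primrec logit :: "'a fps fps \<Rightarrow> nat \<Rightarrow> 'a fps fps" where
  "logit T 0 = 0"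
| "logit T (Suc k) = logit T k + (T - EXP (logit T k))"

lemma logit_props: assumes "T $ 0 $ 0 = 1"
  shows "high 1 (logit T k) \<and> cong2 (Suc k) (EXP (logit T k)) T"
proof (induct k)
  case 0
  then show ?case using assms by (simp add: cong2_def high_def fps_sub_nth)
next
  case (Suc k)
  define L where "L = logit T k"
  define D where "D = T - EXP L"
  have hL: "high 1 L" and cL: "cong2 (Suc k) (EXP L) T" using Suc by (simp_all add: L_def)
  have hD: "high (Suc k) D" using cL unfolding D_def cong2_def by (metis high_uminus minus_diff_eq)
  have eq: "logit T (Suc k) = L + D" by (simp add: L_def D_def)
  have h1: "high 1 (L + D)" using hL hD high_mono[of 1 "Suc k"] high_add by simp
  have cLD: "cong2 (Suc k) (L + D) L" using hD by (simp add: cong2_def)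
  have "cong2 (Suc (Suc k)) (EXP (L + D) - (L + D)) (EXP L - L)"
    by (rule EXP_resp1[OF h1 hL cLD])
  then have "cong2 (Suc (Suc k)) (EXP (L + D) - (L + D) + (L + D)) (EXP L - L + (L + D))"
    using cong2_add cong2_refl by blast
  then have "cong2 (Suc (Suc k)) (EXP (L + D)) T" by (simp add: D_def algebra_simps)
  then show ?case using h1 eq by simp
qed

definition LOG :: "'a fps fps \<Rightarrow> 'a fps fps" where "LOG T = limR (logit T)"

lemma LOG_props: assumes "T $ 0 $ 0 = 1" shows "high 1 (LOG T)" "EXP (LOG T) = T"
proof -
  have st: "cong2 (Suc k) (logit T (Suc k)) (logit T k)" for k
  proof -
    have "cong2 (Suc k) (EXP (logit T k)) T" using logit_props[OF assms] by blast
    then have "high (Suc k) (T - EXP (logit T k))" unfolding cong2_def by (metis high_uminus minus_diff_eq)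
    then show ?thesis by (simp add: cong2_def)
  qed
  have cl: "cong2 (Suc k) (LOG T) (logit T k)" for k unfolding LOG_def by (rule limR_cong[OF st])
  show h: "high 1 (LOG T)" using cl[of 0] by (simp add: cong2_def high_def fps_sub_nth)
  show "EXP (LOG T) = T"
  proof (rule cong2_eqI)
    fix d
    have "cong2 (Suc d) (EXP (LOG T)) (EXP (logit T d))"
      using EXP_resp[OF h _ cl[of d]] logit_props[OF assms] by blast
    then have "cong2 (Suc d) (EXP (LOG T)) T" using logit_props[OF assms] cong2_trans by blast
    then show "cong2 d (EXP (LOG T)) T" using cong2_mono le_SucI by blast
  qed
qed

definition BCHR :: "'a fps fps \<Rightarrow> 'a fps fps \<Rightarrow> 'a fps fps" where
  "BCHR X Y = LOG (EXP X * EXP Y) - X - Y"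

lemma BCHR_isBCH: assumes "high 1 X" "high 1 Y" shows "isBCH X Y (BCHR X Y)"
proof -
  have t: "(EXP X * EXP Y) $ 0 $ 0 = 1" by simp
  show ?thesis unfolding isBCH_def BCHR_def
    using LOG_props[OF t] assms by (simp add: high1_iff fps_sub_nth)
qed

lemma BCHR_unique: "high 1 X \<Longrightarrow> high 1 Y \<Longrightarrow> isBCH X Y Z \<Longrightarrow> BCHR X Y = Z"
  using BCH_unique BCHR_isBCH by blast

lemma BCHR_high1: "high 1 X \<Longrightarrow> high 1 Y \<Longrightarrow> high 1 (BCHR X Y)"
  using BCHR_isBCH by (simp add: isBCH_def high1_iff)

lemma BCHR_local: "high 1 X \<Longrightarrow> high 1 X' \<Longrightarrow> high 1 Y \<Longrightarrow> high 1 Y' \<Longrightarrow> cong2 d X X' \<Longrightarrow> cong2 d Y Y'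
   \<Longrightarrow> cong2 (Suc d) (BCHR X Y) (BCHR X' Y')"
  using BCH_local BCHR_isBCH by blast

end


lemma sum_atMost_rev': "(\<Sum>p\<le>(i::nat). g p) = (\<Sum>p\<le>i. g (i - p))"
  by (rule sum.reindex_bij_witness[where i="\<lambda>p. i - p" and j="\<lambda>p. i - p"]) auto

primrec adp :: "'a::ring_1 fps fps \<Rightarrow> nat \<Rightarrow> 'a fps fps \<Rightarrow> 'a fps fps" where
  "adp Z 0 A = A"
| "adp Z (Suc n) A = Z * adp Z n A - adp Z n A * Z"

lemma high_adp: "high 1 Z \<Longrightarrow> high d A \<Longrightarrow> high (d + n) (adp Z n A)"
proof (induct n)
  case (Suc n)
  then have h: "high (d + n) (adp Z n A)" by simp
  have "high (1 + (d + n)) (Z * adp Z n A)" by (rule high_mult[OF Suc(2) h])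
  moreover have "high ((d + n) + 1) (adp Z n A * Z)" by (rule high_mult[OF h Suc(2)])
  ultimately show ?case by (simp add: high_diff)
qed simp

lemma adp_local: assumes "high 1 V" "high 1 V'" "high 1 A" "high 1 A'" "cong2 d V V'" "cong2 d A A'"
  shows "cong2 d (adp V n A) (adp V' n A') \<and> (n \<ge> 1 \<longrightarrow> cong2 (Suc d) (adp V n A) (adp V' n A'))"
proof (induct n)
  case 0 then show ?case using assms by simp
next
  case (Suc n)
  then have c: "cong2 d (adp V n A) (adp V' n A')" by simp
  have h: "high 1 (adp V n A)" "high 1 (adp V' n A')"
    by (rule high_mono[OF _ high_adp[OF assms(1) assms(3)]], simp)
       (rule high_mono[OF _ high_adp[OF assms(2) assms(4)]], simp)
  have "cong2 (min (d + 1) (1 + d)) (V * adp V n A) (V' * adp V' n A')"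
    by (rule cong2_mult_gen[OF assms(5) c assms(2) h(1)])
  moreover have "cong2 (min (d + 1) (1 + d)) (adp V n A * V) (adp V' n A' * V')"
    by (rule cong2_mult_gen[OF c assms(5) h(2) assms(1)])
  ultimately have "cong2 (Suc d) (adp V (Suc n) A) (adp V' (Suc n) A')"
    by (simp add: cong2_diff)
  then show ?case using cong2_mono le_SucI by blast
qed

lemma mult_00_nth: fixes T D :: "'a::ring_1 fps fps" assumes "high (i + j) D" shows "(T * D) $ i $ j = T $ 0 $ 0 * D $ i $ j"
proof -
  have "(T * D) $ i $ j = (\<Sum>p\<le>i. \<Sum>q\<le>j. if p = 0 then (if q = 0 then T $ 0 $ 0 * D $ i $ j else 0) else 0)"
    unfolding mult2_nth
  proof (intro sum.cong refl)
    fix p q assume "p \<in> {..i}" "q \<in> {..j}"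
    then show "T $ p $ q * D $ (i - p) $ (j - q) = (if p = 0 then (if q = 0 then T $ 0 $ 0 * D $ i $ j else 0) else 0)"
      using assms by (auto simp: high_def)
  qed
  also have "\<dots> = (\<Sum>p\<le>i. if p = 0 then T $ 0 $ 0 * D $ i $ j else 0)"
    by (intro sum.cong refl) simp
  also have "\<dots> = T $ 0 $ 0 * D $ i $ j" by simp
  finally show ?thesis .
qed

lemma cancel_left: fixes T D :: "'a::ring_1 fps fps" assumes "T $ 0 $ 0 = 1" "T * D = T * D'" shows "D = D'"
proof -
  have z: "T * (D - D') = 0" using assms(2) by (simp add: algebra_simps)
  have "high d (D - D')" for d
  proof (induct d)
    case (Suc d)
    show ?case unfolding high_def
    proof (intro allI impI)
      fix i j assume "i + j < Suc d"
      show "(D - D') $ i $ j = 0"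
      proof (cases "i + j < d")
        case True then show ?thesis using Suc by (simp add: high_def)
      next
        case False
        then have "i + j = d" using \<open>i + j < Suc d\<close> by simp
        then have "(T * (D - D')) $ i $ j = (D - D') $ i $ j" using mult_00_nth[of i j "D - D'" T] Suc assms(1) by simp
        then show ?thesis using z by simp
      qed
    qed
  qed simp
  then show ?thesis using cong2_eqI[of D D'] by (simp add: cong2_def)
qed

lemma SER_minus_head: "SER f - f 0 = SER (\<lambda>n. if n = 0 then 0 else f n)"
  by (rule fps_ext, rule fps_ext) (simp add: SER_nth sum.atMost_shift fps_sub_nth)

definition trunc :: "nat \<Rightarrow> 'a::ring_1 fps fps \<Rightarrow> 'a fps fps" where
  "trunc N W = Abs_fps (\<lambda>i. Abs_fps (\<lambda>j. if i + j < N then W $ i $ j else 0))"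

lemma trunc_cong: "cong2 N W (trunc N W)"
  by (simp add: cong2_def high_def trunc_def fps_sub_nth)
lemma trunc_high1: "high 1 W \<Longrightarrow> high 1 (trunc N W)"
  by (simp add: trunc_def)

definition toR :: "'a::ring_1 fps2 \<Rightarrow> 'a fps fps" where
  "toR f = Abs_fps (\<lambda>i. Abs_fps (\<lambda>j. f i j))"
definition fromR :: "'a::ring_1 fps fps \<Rightarrow> 'a fps2" where
  "fromR F = (\<lambda>i j. F $ i $ j)"

lemma toR_nth[simp]: "toR f $ i $ j = f i j" by (simp add: toR_def)
lemma toR_fromR[simp]: "toR (fromR F) = F" by (rule fps_ext, rule fps_ext) (simp add: fromR_def)
lemma fromR_toR[simp]: "fromR (toR f) = f" by (simp add: fromR_def)
lemma toR_eq_iff: "toR f = toR g \<longleftrightarrow> f = g" by (metis fromR_toR)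
lemma toR_fmul: "toR (fmul f g) = toR f * toR g"
  by (rule fps_ext, rule fps_ext) (simp add: fmul_def mult2_nth)
lemma toR_fadd: "toR (fadd f g) = toR f + toR g"
  by (rule fps_ext, rule fps_ext) (simp add: fadd_def)
lemma toR_fsub: "toR (fsub f g) = toR f - toR g"
  by (rule fps_ext, rule fps_ext) (simp add: fsub_def fps_sub_nth)
lemma toR_fone: "toR fone = (1 :: 'a::ring_1 fps fps)"
  by (rule fps_ext, rule fps_ext) (simp add: fone_def)
lemma toR_fpow: "toR (fpow f n) = toR f ^ n"
  by (induct n) (simp_all add: toR_fone toR_fmul)
lemma toR_high1: "high 1 (toR f) \<longleftrightarrow> f 0 0 = 0" by (simp add: high1_iff)

definition agree :: "nat \<Rightarrow> 'a::ring_1 fps2 \<Rightarrow> 'a fps2 \<Rightarrow> bool" where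
  "agree d f g \<longleftrightarrow> (\<forall>i j. i + j < d \<longrightarrow> f i j = g i j)"

lemma agree_cong2: "agree d f g \<longleftrightarrow> cong2 d (toR f) (toR g)"
  by (simp add: agree_def cong2_def high_def fps_sub_nth)

definition lineR :: "(nat \<Rightarrow> nat \<Rightarrow> bool) \<Rightarrow> 'a::ring_1 fps fps \<Rightarrow> 'a fps fps" where
  "lineR P F = Abs_fps (\<lambda>i. Abs_fps (\<lambda>j. if P i j then F $ i $ j else 0))"

definition goodline :: "(nat \<Rightarrow> nat \<Rightarrow> bool) \<Rightarrow> bool" where
  "goodline P \<longleftrightarrow> P 0 0 \<and> (\<forall>i j p q. p \<le> i \<longrightarrow> q \<le> j \<longrightarrow> (P i j \<longleftrightarrow> P p q \<and> P (i - p) (j - q)))"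

lemma goodline_s: "goodline (\<lambda>i j. i = 0)" by (auto simp: goodline_def)
lemma goodline_t: "goodline (\<lambda>i j. j = 0)" by (auto simp: goodline_def)

lemma lineR_nth[simp]: "lineR P F $ i $ j = (if P i j then F $ i $ j else 0)" by (simp add: lineR_def)

lemma lineR_mult: assumes "goodline P" shows "lineR P (F * G) = lineR P F * lineR P G"
proof (rule fps_ext, rule fps_ext)
  fix i j
  have t: "(if P i j then F $ p $ q * G $ (i - p) $ (j - q) else 0) =
    (if P p q then F $ p $ q else 0) * (if P (i - p) (j - q) then G $ (i - p) $ (j - q) else 0)"
    if "p \<le> i" "q \<le> j" for p q using assms that unfolding goodline_def by auto
  have "lineR P (F * G) $ i $ j = (\<Sum>p\<le>i. \<Sum>q\<le>j. if P i j then F $ p $ q * G $ (i - p) $ (j - q) else 0)"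
    by (cases "P i j") (simp_all add: mult2_nth)
  also have "\<dots> = (lineR P F * lineR P G) $ i $ j"
    unfolding mult2_nth lineR_nth by (intro sum.cong refl t) auto
  finally show "lineR P (F * G) $ i $ j = (lineR P F * lineR P G) $ i $ j" .
qed

lemma lineR_add: "lineR P (F + G) = lineR P F + lineR P G"
  by (rule fps_ext, rule fps_ext) simp
lemma lineR_diff: "lineR P (F - G) = lineR P F - lineR P G"
  by (rule fps_ext, rule fps_ext) (simp add: fps_sub_nth)
lemma lineR_zero[simp]: "lineR P 0 = 0" by (rule fps_ext, rule fps_ext) simp
lemma lineR_one: "goodline P \<Longrightarrow> lineR P 1 = 1"
  by (rule fps_ext, rule fps_ext) (auto simp: goodline_def)
lemma lineR_sum: "lineR P (sum f S) = (\<Sum>x\<in>S. lineR P (f x))"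
  by (induct S rule: infinite_finite_induct) (simp_all add: lineR_add)
lemma lineR_power: "goodline P \<Longrightarrow> lineR P (F ^ n) = lineR P F ^ n"
  by (induct n) (simp_all add: lineR_mult lineR_one)
lemma lineR_high1: "goodline P \<Longrightarrow> high 1 F \<Longrightarrow> high 1 (lineR P F)"
  by (simp add: high1_iff)

context kalg_loc
begin

lemma k2_mult_comm: "k2 c * (F * G) = F * (k2 c * G)"
  by (metis k2_central mult.assoc)

lemma adp_T: "adp Z n A = (\<Sum>a\<le>n. k2 ((-1)^(n-a) * of_nat (n choose a)) * (Z^a * A * Z^(n-a)))"
proof (induct n)
  case 0 then show ?case by simp
next
  case (Suc n)
  let ?c = "\<lambda>n a. ((-1)^(n-a) * of_nat (n choose a) :: 'k)"
  have "adp Z (Suc n) A = (\<Sum>a\<le>n. k2 (?c n a) * (Z^(Suc a) * A * Z^(n-a)))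
       - (\<Sum>a\<le>n. k2 (?c n a) * (Z^a * A * Z^(Suc (n-a))))"
  proof -
    have e1: "Z * (\<Sum>a\<le>n. k2 (?c n a) * (Z^a * A * Z^(n-a))) = (\<Sum>a\<le>n. k2 (?c n a) * (Z^(Suc a) * A * Z^(n-a)))"
      by (simp add: sum_distrib_left k2_mult_comm[symmetric] mult.assoc)
    have e2: "(\<Sum>a\<le>n. k2 (?c n a) * (Z^a * A * Z^(n-a))) * Z = (\<Sum>a\<le>n. k2 (?c n a) * (Z^a * A * Z^(Suc (n-a))))"
      by (simp add: sum_distrib_right mult.assoc power_commutes)
    show ?thesis using Suc by (simp only: adp.simps e1 e2)
  qed
  also have "(\<Sum>a\<le>n. k2 (?c n a) * (Z^(Suc a) * A * Z^(n-a)))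
     = (\<Sum>a\<le>Suc n. k2 (if a = 0 then 0 else ?c n (a - 1)) * (Z^a * A * Z^(Suc n - a)))"
    by (subst sum.atMost_Suc_shift) simp
  also have "(\<Sum>a\<le>n. k2 (?c n a) * (Z^a * A * Z^(Suc (n-a))))
     = (\<Sum>a\<le>Suc n. k2 (?c n a) * (Z^a * A * Z^(Suc n - a)))"
    by (simp add: Suc_diff_le binomial_eq_0)
  also have "(\<Sum>a\<le>Suc n. k2 (if a = 0 then 0 else ?c n (a - 1)) * (Z^a * A * Z^(Suc n - a)))
      - (\<Sum>a\<le>Suc n. k2 (?c n a) * (Z^a * A * Z^(Suc n - a)))
      = (\<Sum>a\<le>Suc n. k2 ((if a = 0 then 0 else ?c n (a - 1)) - ?c n a) * (Z^a * A * Z^(Suc n - a)))"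
    by (simp add: sum_subtractf k2_diff algebra_simps)
  also have "\<dots> = (\<Sum>a\<le>Suc n. k2 (?c (Suc n) a) * (Z^a * A * Z^(Suc n - a)))"
  proof (rule sum.cong[OF refl])
    fix a assume "a \<in> {..Suc n}"
    then have a: "a \<le> Suc n" by simp
    have "(if a = 0 then 0 else ?c n (a - 1)) - ?c n a = ?c (Suc n) a"
    proof (cases a)
      case 0 then show ?thesis by simp
    next
      case (Suc a')
      show ?thesis
      proof (cases "a' = n")
        case True then show ?thesis using Suc by simp
      next
        case False
        then have a'n: "a' < n" using a Suc by simp
        have "n - a' = Suc (n - Suc a')" using a'n by simp
        then show ?thesis using Suc a'n by (simp add: algebra_simps)
      qed
    qed
    then show "k2 ((if a = 0 then 0 else ?c n (a - 1)) - ?c n a) * (Z^a * A * Z^(Suc n - a)) =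
      k2 (?c (Suc n) a) * (Z^a * A * Z^(Suc n - a))" by simp
  qed
  finally show ?case .
qed


lemma k2_two: "(k2 u * P) * (k2 v * X) = k2 (u * v) * (P * X)"
  by (metis k2_assoc k2_mult_comm mult.assoc)

definition TI :: "(nat \<Rightarrow> nat \<Rightarrow> 'k) \<Rightarrow> 'a fps fps \<Rightarrow> 'a fps fps \<Rightarrow> 'a fps fps" where
  "TI c Z A = SER (\<lambda>n. \<Sum>a\<le>n. k2 (c a (n - a)) * (Z^a * A * Z^(n - a)))"

lemma TI_piece_high: assumes "high 1 Z" shows "high n (\<Sum>a\<le>n. k2 (c a (n - a)) * (Z^a * A * Z^(n - a)))"
proof (rule high_sum)
  fix a assume "a \<in> {..n}"
  then have "high (a + (n - a)) (Z^a * A * Z^(n - a))"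
    by (intro high_mult high_mult_right high_power assms)
  then show "high n (k2 (c a (n - a)) * (Z^a * A * Z^(n - a)))" using \<open>a \<in> {..n}\<close> by (simp add: high_k2)
qed

lemma EXP_SER: "EXP W = SER (\<lambda>n. k2 (inverse (fact n)) * W ^ n)"
  by (rule fps_ext, rule fps_ext) (simp add: EXP_def SER_nth expM_def)

lemma EXP_piece_high: "high 1 W \<Longrightarrow> high n (k2 (inverse (fact n)) * W ^ n)"
  by (simp add: high_k2 high_power)

lemma TI_EXP_left: assumes Z: "high 1 Z" shows "EXP Z * TI c Z A = TI (conv c) Z A"
proof -
  have "EXP Z * TI c Z A = SER (\<lambda>n. \<Sum>k\<le>n. (k2 (inverse (fact k)) * Z ^ k) *
      (\<Sum>a\<le>n - k. k2 (c a (n - k - a)) * (Z^a * A * Z^(n - k - a))))"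
    unfolding EXP_SER TI_def by (rule SER_mult[OF EXP_piece_high[OF Z] TI_piece_high[OF Z]])
  also have "\<dots> = TI (conv c) Z A" unfolding TI_def
  proof (rule arg_cong[where f=SER], rule ext)
    fix n
    define g where "g k a = k2 (inverse (fact k) * c a (n - k - a)) * (Z^(k + a) * A * Z^(n - (k + a)))" for k a
    have "(\<Sum>k\<le>n. (k2 (inverse (fact k)) * Z ^ k) * (\<Sum>a\<le>n - k. k2 (c a (n - k - a)) * (Z^a * A * Z^(n - k - a))))
        = (\<Sum>k\<le>n. \<Sum>a\<le>n - k. g k a)"
      unfolding g_def
      by (simp only: sum_distrib_left k2_two) (simp add: mult.assoc power_add diff_diff_add)
    also have "\<dots> = (\<Sum>m\<le>n. \<Sum>k\<le>m. g k (m - k))" by (rule tri2)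
    also have "\<dots> = (\<Sum>m\<le>n. k2 (conv c m (n - m)) * (Z^m * A * Z^(n - m)))"
    proof (rule sum.cong[OF refl])
      fix m assume "m \<in> {..n}"
      then have mn: "m \<le> n" by simp
      have "(\<Sum>k\<le>m. g k (m - k)) = (\<Sum>k\<le>m. k2 (c (m - k) (n - m) * inverse (fact k)) * (Z^m * A * Z^(n - m)))"
        unfolding g_def by (rule sum.cong[OF refl]) (simp add: mult.commute)
      also have "\<dots> = k2 (conv c m (n - m)) * (Z^m * A * Z^(n - m))"
        by (simp add: conv_def k2_sum sum_distrib_right)
      finally show "(\<Sum>k\<le>m. g k (m - k)) = k2 (conv c m (n - m)) * (Z^m * A * Z^(n - m))" .
    qed
    finally show "(\<Sum>k\<le>n. (k2 (inverse (fact k)) * Z ^ k) * (\<Sum>a\<le>n - k. k2 (c a (n - k - a)) * (Z^a * A * Z^(n - k - a))))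
        = (\<Sum>a\<le>n. k2 (conv c a (n - a)) * (Z^a * A * Z^(n - a)))" .
  qed
  finally show ?thesis .
qed

definition cR :: "nat \<Rightarrow> nat \<Rightarrow> 'k" where "cR a b = (if a = 0 then inverse (fact b) else 0)"

lemma TI_EXP_right: assumes Z: "high 1 Z" shows "A * EXP Z = TI cR Z A"
proof -
  have hA: "high n (if n = 0 then A else 0)" for n by simp
  have "A * EXP Z = SER (\<lambda>n. if n = 0 then A else 0) * EXP Z" by (simp add: SER_const)
  also have "\<dots> = SER (\<lambda>n. \<Sum>k\<le>n. (if k = 0 then A else 0) * (k2 (inverse (fact (n - k))) * Z ^ (n - k)))"
    unfolding EXP_SER by (rule SER_mult[OF hA EXP_piece_high[OF Z]])
  also have "\<dots> = TI cR Z A" unfolding TI_def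
  proof (rule arg_cong[where f=SER], rule ext)
    fix n
    have "(\<Sum>k\<le>n. (if k = 0 then A else 0) * (k2 (inverse (fact (n - k))) * Z ^ (n - k)))
       = (\<Sum>k\<le>n. if k = 0 then A * (k2 (inverse (fact n)) * Z ^ n) else 0)"
      by (rule sum.cong) auto
    also have "\<dots> = A * (k2 (inverse (fact n)) * Z ^ n)" by (simp add: sum.delta)
    also have "\<dots> = (\<Sum>a\<le>n. if a = 0 then k2 (cR a (n - a)) * (Z^a * A * Z^(n - a)) else 0)"
      by (simp add: sum.delta cR_def k2_mult_comm)
    also have "\<dots> = (\<Sum>a\<le>n. k2 (cR a (n - a)) * (Z^a * A * Z^(n - a)))"
      by (rule sum.cong) (auto simp: cR_def)
    finally show "(\<Sum>k\<le>n. (if k = 0 then A else 0) * (k2 (inverse (fact (n - k))) * Z ^ (n - k))) =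
      (\<Sum>a\<le>n. k2 (cR a (n - a)) * (Z^a * A * Z^(n - a)))" .
  qed
  finally show ?thesis .
qed

lemma ER_k2: "ER (k2 c * F) = k2 c * ER F"
proof (rule fps_ext, rule fps_ext)
  fix i j
  have "of_nat (i+j) * kap c = kap c * of_nat (i+j)" by (rule kap_central[symmetric])
  then show "ER (k2 c * F) $ i $ j = (k2 c * ER F) $ i $ j"
    by (simp only: ER_nth k2_mult_nth mult.assoc[symmetric])
qed

definition cF :: "nat \<Rightarrow> nat \<Rightarrow> 'k" where "cF a b = inverse (fact (a + b + 1))"

lemma ER_EXP: assumes Z: "high 1 Z" shows "ER (EXP Z) = TI cF Z (ER Z)"
proof -
  have "ER (EXP Z) = SER (\<lambda>n. ER (k2 (inverse (fact n)) * Z ^ n))"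
    unfolding EXP_SER ER_SER ..
  also have "\<dots> = SER (\<lambda>n. ER (k2 (inverse (fact (Suc n))) * Z ^ (Suc n)))"
    by (rule SER_shift) (simp_all add: ER_high EXP_piece_high[OF Z])
  also have "\<dots> = TI cF Z (ER Z)" unfolding TI_def
  proof (rule arg_cong[where f=SER], rule ext)
    fix n
    have "ER (k2 (inverse (fact (Suc n))) * Z ^ (Suc n)) = k2 (inverse (fact (Suc n))) * (\<Sum>a\<le>n. Z ^ a * ER Z * Z ^ (n - a))"
      by (simp only: ER_k2 ER_power)
    also have "\<dots> = (\<Sum>a\<le>n. k2 (cF a (n - a)) * (Z^a * ER Z * Z^(n - a)))"
      by (simp add: sum_distrib_left cF_def)
    finally show "ER (k2 (inverse (fact (Suc n))) * Z ^ (Suc n)) = (\<Sum>a\<le>n. k2 (cF a (n - a)) * (Z^a * ER Z * Z^(n - a)))" .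
  qed
  finally show ?thesis .
qed

definition Lsum :: "(nat \<Rightarrow> 'k) \<Rightarrow> 'a fps fps \<Rightarrow> 'a fps fps \<Rightarrow> 'a fps fps" where
  "Lsum l Z A = SER (\<lambda>n. k2 (l n) * adp Z n A)"

lemma Lsum_TI: "Lsum l Z A = TI (cL l) Z A"
  unfolding Lsum_def TI_def
proof (rule arg_cong[where f=SER], rule ext)
  fix n
  show "k2 (l n) * adp Z n A = (\<Sum>a\<le>n. k2 (cL l a (n - a)) * (Z^a * A * Z^(n - a)))"
    unfolding adp_T sum_distrib_left
    by (rule sum.cong[OF refl]) (simp add: cL_def k2_assoc)
qed

lemma DEXP: assumes "high 1 V" shows "ER (EXP V) = EXP V * Lsum lamF V (ER V)"
proof -
  have "conv (cL lamF) = (cF :: nat \<Rightarrow> nat \<Rightarrow> 'k)" by (intro ext) (simp add: conv_lam cF_def)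
  then show ?thesis by (simp add: Lsum_TI TI_EXP_left[OF assms] ER_EXP[OF assms])
qed

lemma CONJ: assumes "high 1 Y" shows "B * EXP Y = EXP Y * Lsum muC Y B"
proof -
  have "conv (cL muC) = (cR :: nat \<Rightarrow> nat \<Rightarrow> 'k)" by (intro ext) (simp add: conv_mu cR_def)
  then show ?thesis by (simp add: Lsum_TI TI_EXP_left[OF assms] TI_EXP_right[OF assms])
qed


definition GV :: "'a set \<Rightarrow> 'a fps fps \<Rightarrow> bool" where "GV S F \<longleftrightarrow> (\<forall>i j. F $ i $ j \<in> S)"

lemma sub_zero: "subspace_k sc S \<Longrightarrow> 0 \<in> S" by (simp add: subspace_k_def)
lemma sub_add: "subspace_k sc S \<Longrightarrow> x \<in> S \<Longrightarrow> y \<in> S \<Longrightarrow> x + y \<in> S" by (simp add: subspace_k_def)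
lemma sub_kap: "subspace_k sc S \<Longrightarrow> x \<in> S \<Longrightarrow> kap c * x \<in> S" by (simp add: subspace_k_def sc_eq[symmetric])
lemma sub_uminus: "subspace_k sc S \<Longrightarrow> x \<in> S \<Longrightarrow> - x \<in> S"
  using sub_kap[of S x "-1"] by (simp add: kap_uminus)
lemma sub_diff: "subspace_k sc S \<Longrightarrow> x \<in> S \<Longrightarrow> y \<in> S \<Longrightarrow> x - y \<in> S"
  using sub_add[of S x "-y"] sub_uminus by simp
lemma sub_sum: "subspace_k sc S \<Longrightarrow> (\<And>x. x \<in> A \<Longrightarrow> f x \<in> S) \<Longrightarrow> sum f A \<in> S"
  by (induct A rule: infinite_finite_induct) (auto intro: sub_zero sub_add)
lemma sub_of_nat: "subspace_k sc S \<Longrightarrow> x \<in> S \<Longrightarrow> of_nat m * x \<in> S"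
  using sub_kap[of S x "of_nat m"] by simp

lemma GV_0[simp]: "subspace_k sc S \<Longrightarrow> GV S 0" by (simp add: GV_def sub_zero)
lemma GV_add: "subspace_k sc S \<Longrightarrow> GV S F \<Longrightarrow> GV S G \<Longrightarrow> GV S (F + G)" by (simp add: GV_def sub_add)
lemma GV_diff: "subspace_k sc S \<Longrightarrow> GV S F \<Longrightarrow> GV S G \<Longrightarrow> GV S (F - G)" by (simp add: GV_def sub_diff fps_sub_nth)
lemma GV_k2: "subspace_k sc S \<Longrightarrow> GV S F \<Longrightarrow> GV S (k2 c * F)" by (simp add: GV_def sub_kap)
lemma GV_ER: "subspace_k sc S \<Longrightarrow> GV S F \<Longrightarrow> GV S (ER F)" by (auto simp only: GV_def ER_nth intro!: sub_of_nat)
lemma GV_SER: "subspace_k sc S \<Longrightarrow> (\<And>n. GV S (f n)) \<Longrightarrow> GV S (SER f)"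
  by (simp add: GV_def SER_nth fps_sum_nth sub_sum)

lemma GV_bracket: assumes sub: "subspace_k sc S" and lie: "\<forall>x\<in>S. \<forall>y\<in>S. x * y - y * x \<in> S"
  and Z: "GV S Z" and A: "GV S A" shows "GV S (Z * A - A * Z)"
  unfolding GV_def
proof (intro allI)
  fix i j
  have "(A * Z) $ i $ j = (\<Sum>p\<le>i. \<Sum>q\<le>j. A $ (i - p) $ (j - q) * Z $ p $ q)"
  proof -
    have "(A * Z) $ i $ j = (\<Sum>p\<le>i. \<Sum>q\<le>j. A $ p $ q * Z $ (i - p) $ (j - q))" by (rule mult2_nth)
    also have "\<dots> = (\<Sum>p\<le>i. \<Sum>q\<le>j. A $ (i - p) $ q * Z $ (i - (i - p)) $ (j - q))"
      by (subst sum_atMost_rev') simp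
    also have "\<dots> = (\<Sum>p\<le>i. \<Sum>q\<le>j. A $ (i - p) $ (j - q) * Z $ (i - (i - p)) $ (j - (j - q)))"
      by (subst (2) sum_atMost_rev') simp
    also have "\<dots> = (\<Sum>p\<le>i. \<Sum>q\<le>j. A $ (i - p) $ (j - q) * Z $ p $ q)"
      by (intro sum.cong refl) simp
    finally show ?thesis .
  qed
  then have "(Z * A - A * Z) $ i $ j = (\<Sum>p\<le>i. \<Sum>q\<le>j. Z $ p $ q * A $ (i - p) $ (j - q) - A $ (i - p) $ (j - q) * Z $ p $ q)"
    by (simp add: fps_sub_nth mult2_nth sum_subtractf)
  also have "\<dots> \<in> S" using Z A lie by (auto simp: GV_def intro!: sub_sum[OF sub])
  finally show "(Z * A - A * Z) $ i $ j \<in> S" .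
qed

lemma GV_adp: "subspace_k sc S \<Longrightarrow> \<forall>x\<in>S. \<forall>y\<in>S. x * y - y * x \<in> S \<Longrightarrow> GV S Z \<Longrightarrow> GV S A \<Longrightarrow> GV S (adp Z n A)"
  by (induct n) (simp_all add: GV_bracket)

lemma GV_Lsum: "subspace_k sc S \<Longrightarrow> \<forall>x\<in>S. \<forall>y\<in>S. x * y - y * x \<in> S \<Longrightarrow> GV S Z \<Longrightarrow> GV S A \<Longrightarrow> GV S (Lsum l Z A)"
  unfolding Lsum_def by (intro GV_SER GV_k2 GV_adp)

lemma Lsum_local: assumes "high 1 V" "high 1 V'" "high 1 A" "high 1 A'" "cong2 d V V'" "cong2 d A A'"
  shows "cong2 (Suc d) (Lsum l V A - k2 (l 0) * A) (Lsum l V' A' - k2 (l 0) * A')"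
proof -
  have e: "Lsum l V A - k2 (l 0) * A = SER (\<lambda>n. if n = 0 then 0 else k2 (l n) * adp V n A)" for V A
    unfolding Lsum_def using SER_minus_head[of "\<lambda>n. k2 (l n) * adp V n A"] by simp
  show ?thesis unfolding e
  proof (rule SER_resp)
    fix n
    show "cong2 (Suc d) (if n = 0 then 0 else k2 (l n) * adp V n A) (if n = 0 then 0 else k2 (l n) * adp V' n A')"
      using adp_local[OF assms, of n] by (auto intro: cong2_k2)
  qed
qed

lemma ER_EXP_prod: "ER (EXP X * EXP Y) = ER (EXP X) * EXP Y + EXP X * ER (EXP Y)"
  by (rule ER_mult)

theorem BCH_Lie: assumes sub: "subspace_k sc S" and lie: "\<forall>x\<in>S. \<forall>y\<in>S. x * y - y * x \<in> S"
  and hX: "high 1 X" and hY: "high 1 Y" and gX: "GV S X" and gY: "GV S Y"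
  shows "GV S (BCHR X Y)"
proof -
  define W where "W = X + Y + BCHR X Y"
  have bw: "isBCH X Y (BCHR X Y)" by (rule BCHR_isBCH[OF hX hY])
  have EW: "EXP W = EXP X * EXP Y" using bw by (simp add: W_def isBCH_def)
  have hW: "high 1 W" using bw hX hY by (simp add: W_def isBCH_def high1_iff)
  define Px where "Px = Lsum lamF X (ER X)"
  define Py where "Py = Lsum lamF Y (ER Y)"
  define Psi where "Psi = Lsum muC Y Px + Py"
  have gPsi: "GV S Psi" unfolding Psi_def Px_def Py_def
    by (intro GV_add GV_Lsum GV_ER sub lie gX gY)
  have "EXP W * Lsum lamF W (ER W) = ER (EXP W)" by (rule DEXP[OF hW, symmetric])
  also have "\<dots> = ER (EXP X) * EXP Y + EXP X * ER (EXP Y)" unfolding EW by (rule ER_mult)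
  also have "\<dots> = EXP X * Px * EXP Y + EXP X * (EXP Y * Py)"
    unfolding Px_def Py_def DEXP[OF hX] DEXP[OF hY] ..
  also have "\<dots> = EXP X * (EXP Y * Lsum muC Y Px) + EXP X * (EXP Y * Py)"
  proof -
    have "Px * EXP Y = EXP Y * Lsum muC Y Px" by (rule CONJ[OF hY])
    then show ?thesis by (simp only: mult.assoc)
  qed
  also have "\<dots> = EXP W * Psi" by (simp add: EW Psi_def algebra_simps)
  finally have key: "Lsum lamF W (ER W) = Psi"
    using cancel_left[of "EXP W"] by simp
  have "\<forall>i j. i + j < N \<longrightarrow> W $ i $ j \<in> S" for N
  proof (induct N)
    case 0 then show ?case by simp
  next
    case (Suc N)
    define W' where "W' = trunc N W"
    have cW: "cong2 N W W'" unfolding W'_def by (rule trunc_cong)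
    have hW': "high 1 W'" unfolding W'_def by (rule trunc_high1[OF hW])
    have gW': "GV S W'" using Suc sub_zero[OF sub] by (simp add: W'_def trunc_def GV_def)
    have cL: "cong2 (Suc N) (Lsum lamF W (ER W) - k2 (lamF 0) * ER W) (Lsum lamF W' (ER W') - k2 (lamF 0) * ER W')"
      by (rule Lsum_local[OF hW hW' ER_high1 ER_high1 cW ER_cong[OF cW]])
    have l0: "lamF 0 = (1::'k)" by (simp add: lamF_def)
    define Q where "Q = Psi - (Lsum lamF W' (ER W') - ER W')"
    have gQ: "GV S Q" unfolding Q_def by (intro GV_diff GV_Lsum GV_ER sub lie gPsi gW')
    have c: "cong2 (Suc N) (Psi - ER W) (Lsum lamF W' (ER W') - ER W')" using cL l0 key by simp
    have "cong2 (Suc N) (Psi - (Psi - ER W)) Q" unfolding Q_def by (rule cong2_diff[OF cong2_refl c])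
    then have cQ: "cong2 (Suc N) (ER W) Q" by simp
    show ?case
    proof (intro allI impI)
      fix i j assume ij: "i + j < Suc N"
      show "W $ i $ j \<in> S"
      proof (cases "i + j < N")
        case True then show ?thesis using Suc by simp
      next
        case False
        then have ijN: "i + j = N" using ij by simp
        have "ER W $ i $ j = Q $ i $ j" using cong2_nth[OF cQ ij] .
        then have inS: "of_nat N * W $ i $ j \<in> S" using gQ ijN by (simp add: GV_def)
        show ?thesis
        proof (cases "N = 0")
          case True then show ?thesis using hW ijN sub_zero[OF sub] by (simp add: high1_iff)
        next
          case False
          have "kap (inverse (of_nat N)) * (of_nat N * W $ i $ j) = W $ i $ j"
            using kap_inv_nat[of N] False by (simp add: mult.assoc[symmetric])
          then show ?thesis using sub_kap[OF sub inS, of "inverse (of_nat N)"] by simp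
        qed
      qed
    qed
  qed
  then have "GV S W" unfolding GV_def by (meson less_add_Suc1)
  moreover have "BCHR X Y = W - X - Y" by (simp add: W_def)
  ultimately show ?thesis using gX gY by (simp add: GV_diff sub)
qed


lemma toR_fexp: "toR (fexp sc f) = EXP (toR f)"
  by (rule fps_ext, rule fps_ext)
     (simp add: fexp_def EXP_def expM_def fps_sum_nth toR_fpow[symmetric] sc_eq)

lemma BCH_toR: assumes "f 0 0 = 0" "g 0 0 = 0" shows "toR (BCH sc f g) = BCHR (toR f) (toR g)"
proof -
  have hf: "high 1 (toR f)" "high 1 (toR g)" using assms by (simp_all add: high1_iff)
  let ?z = "fromR (BCHR (toR f) (toR g))"
  have P: "?z 0 0 = 0 \<and> fmul (fexp sc f) (fexp sc g) = fexp sc (fadd (fadd f g) ?z)"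
  proof
    show "?z 0 0 = 0" using BCHR_isBCH[OF hf] by (simp add: isBCH_def fromR_def)
    show "fmul (fexp sc f) (fexp sc g) = fexp sc (fadd (fadd f g) ?z)"
      using BCHR_isBCH[OF hf] by (simp add: isBCH_def toR_eq_iff[symmetric] toR_fmul toR_fexp toR_fadd)
  qed
  have "BCH sc f g = ?z" unfolding BCH_def
  proof (rule the_equality)
    show "?z 0 0 = 0 \<and> fmul (fexp sc f) (fexp sc g) = fexp sc (fadd (fadd f g) ?z)" by (rule P)
  next
    fix z assume "z 0 0 = 0 \<and> fmul (fexp sc f) (fexp sc g) = fexp sc (fadd (fadd f g) z)"
    then have "isBCH (toR f) (toR g) (toR z)"
      by (simp add: isBCH_def toR_eq_iff[symmetric] toR_fmul toR_fexp toR_fadd)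
    then have "BCHR (toR f) (toR g) = toR z" by (rule BCHR_unique[OF hf])
    then show "z = ?z" by simp
  qed
  then show ?thesis by simp
qed

lemma k2_lineR: "lineR P (k2 c * F) = k2 c * lineR P F"
  by (rule fps_ext, rule fps_ext) simp

lemma lineR_expM: "goodline P \<Longrightarrow> lineR P (expM M W) = expM M (lineR P W)"
  by (simp add: expM_def lineR_sum k2_lineR lineR_power)

lemma lineR_EXP: assumes "goodline P" shows "lineR P (EXP W) = EXP (lineR P W)"
  by (rule fps_ext, rule fps_ext)
     (simp add: EXP_def lineR_expM[OF assms, symmetric])

lemma lineR_BCHR: assumes "goodline P" "high 1 X" "high 1 Y"
  shows "lineR P (BCHR X Y) = BCHR (lineR P X) (lineR P Y)"
proof -
  have b: "isBCH X Y (BCHR X Y)" by (rule BCHR_isBCH[OF assms(2,3)])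
  have "isBCH (lineR P X) (lineR P Y) (lineR P (BCHR X Y))"
    using b assms(1) unfolding isBCH_def
    by (auto simp: lineR_EXP[OF assms(1), symmetric] lineR_mult[symmetric] lineR_add[symmetric] goodline_def)
  then show ?thesis
    by (rule BCHR_unique[OF lineR_high1[OF assms(1,2)] lineR_high1[OF assms(1,3)], symmetric])
qed

lemma BCHR_zero_left: "high 1 Y \<Longrightarrow> BCHR 0 Y = 0"
  by (rule BCHR_unique) (simp_all add: isBCH_def)
lemma BCHR_zero_right: "high 1 X \<Longrightarrow> BCHR X 0 = 0"
  by (rule BCHR_unique) (simp_all add: isBCH_def)

lemma BCHR_line_vanish: assumes gl: "goodline P" and hX: "high 1 X" and hY: "high 1 Y"
  and vx: "(\<forall>i j. P i j \<and> i + j < d \<longrightarrow> X $ i $ j = 0) \<or> (\<forall>i j. P i j \<and> i + j < d \<longrightarrow> Y $ i $ j = 0)"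
  and ij: "P i j" "i + j \<le> d"
  shows "BCHR X Y $ i $ j = 0"
proof -
  have hlX: "high 1 (lineR P X)" and hlY: "high 1 (lineR P Y)" using gl hX hY by (simp_all add: lineR_high1)
  have "BCHR X Y $ i $ j = lineR P (BCHR X Y) $ i $ j" using ij by simp
  also have "\<dots> = BCHR (lineR P X) (lineR P Y) $ i $ j" by (simp add: lineR_BCHR[OF gl hX hY])
  also have "\<dots> = 0"
    using vx
  proof
    assume v: "\<forall>i j. P i j \<and> i + j < d \<longrightarrow> X $ i $ j = 0"
    have "cong2 d (lineR P X) 0" using v by (auto simp: cong2_def high_def)
    then have "cong2 (Suc d) (BCHR (lineR P X) (lineR P Y)) (BCHR 0 (lineR P Y))"
      by (intro BCHR_local hlX hlY cong2_refl) simp_all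
    then show ?thesis using ij cong2_nth BCHR_zero_left[OF hlY] by fastforce
  next
    assume v: "\<forall>i j. P i j \<and> i + j < d \<longrightarrow> Y $ i $ j = 0"
    have "cong2 d (lineR P Y) 0" using v by (auto simp: cong2_def high_def)
    then have "cong2 (Suc d) (BCHR (lineR P X) (lineR P Y)) (BCHR (lineR P X) 0)"
      by (intro BCHR_local hlX hlY cong2_refl) simp_all
    then show ?thesis using ij cong2_nth BCHR_zero_right[OF hlX] by fastforce
  qed
  finally show ?thesis .
qed


definition dsum :: "'a set \<Rightarrow> 'a set \<Rightarrow> 'a set \<Rightarrow> bool" where
  "dsum G A B \<longleftrightarrow> subspace_k sc G \<and> (\<forall>x\<in>G. \<forall>y\<in>G. x * y - y * x \<in> G) \<and> subspace_k sc A \<and>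
     subspace_k sc B \<and> A \<inter> B = {0} \<and> G = {m + p | m p. m \<in> A \<and> p \<in> B}"

lemma dsum_subG: "dsum G A B \<Longrightarrow> subspace_k sc G" unfolding dsum_def by blast
lemma dsum_lie: "dsum G A B \<Longrightarrow> \<forall>x\<in>G. \<forall>y\<in>G. x * y - y * x \<in> G" unfolding dsum_def by blast
lemma dsum_subA: "dsum G A B \<Longrightarrow> subspace_k sc A" unfolding dsum_def by blast
lemma dsum_subB: "dsum G A B \<Longrightarrow> subspace_k sc B" unfolding dsum_def by blast
lemma dsum_direct: "dsum G A B \<Longrightarrow> A \<inter> B = {0}" unfolding dsum_def by blast
lemma dsum_decomp: "dsum G A B \<Longrightarrow> G = {m + p | m p. m \<in> A \<and> p \<in> B}" unfolding dsum_def by blast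

lemma dsum_swap: assumes "dsum G A B" shows "dsum G B A"
proof -
  have "{m + p | m p. m \<in> A \<and> p \<in> B} = {m + p | m p. m \<in> B \<and> p \<in> A}" by (auto, (metis add.commute)+)
  then show ?thesis using assms unfolding dsum_def by (metis inf_commute)
qed

lemma dsum_AG: assumes "dsum G A B" "x \<in> A" shows "x \<in> G"
proof -
  have "0 \<in> B" using sub_zero[OF dsum_subB[OF assms(1)]] .
  then have "x + 0 \<in> {m + p | m p. m \<in> A \<and> p \<in> B}" using assms(2) by blast
  then show ?thesis using dsum_decomp[OF assms(1)] by simp
qed
lemma dsum_BG: "dsum G A B \<Longrightarrow> x \<in> B \<Longrightarrow> x \<in> G"
  using dsum_AG dsum_swap by blast

lemma proj_unique: assumes "dsum G A B" "m \<in> A" "x - m \<in> B" shows "proj A B x = m"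
  unfolding proj_def
proof (rule the_equality)
  show "m \<in> A \<and> x - m \<in> B" using assms by simp
next
  fix m' assume m': "m' \<in> A \<and> x - m' \<in> B"
  have sA: "subspace_k sc A" and sB: "subspace_k sc B" and d: "A \<inter> B = {0}"
    using dsum_subA[OF assms(1)] dsum_subB[OF assms(1)] dsum_direct[OF assms(1)] by auto
  have "m' - m \<in> A" using sub_diff[OF sA] m' assms by simp
  moreover have "m' - m = (x - m) - (x - m')" by simp
  then have "m' - m \<in> B" using sub_diff[OF sB] m' assms by metis
  ultimately have "m' - m \<in> A \<inter> B" by simp
  then show "m' = m" using d by simp
qed

lemma proj_in: assumes "dsum G A B" "x \<in> G" shows "proj A B x \<in> A \<and> x - proj A B x \<in> B"
proof -
  obtain m p where "x = m + p" "m \<in> A" "p \<in> B" using assms dsum_decomp[OF assms(1)] by blast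
  then have "proj A B x = m" using proj_unique[OF assms(1), of m x] by simp
  then show ?thesis using \<open>x = m + p\<close> \<open>m \<in> A\<close> \<open>p \<in> B\<close> by simp
qed

lemma proj_A: assumes "dsum G A B" "x \<in> A" shows "proj A B x = x"
  by (rule proj_unique[OF assms(1) assms(2)]) (simp add: sub_zero[OF dsum_subB[OF assms(1)]])
lemma proj_B: assumes "dsum G A B" "x \<in> B" shows "proj A B x = 0"
  by (rule proj_unique[OF assms(1) sub_zero[OF dsum_subA[OF assms(1)]]]) (simp add: assms(2))
lemma proj_0: "dsum G A B \<Longrightarrow> proj A B 0 = 0"
  using proj_B sub_zero dsum_subB by blast

lemma GV_toR: "GV S (toR f) \<longleftrightarrow> f \<in> gbar S" by (simp add: GV_def gbar_def)

lemma BCH_G: assumes "dsum G A B" "x \<in> gbar1 G" "y \<in> gbar1 G" shows "BCH sc x y \<in> gbar1 G"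
proof -
  have z: "x 0 0 = 0" "y 0 0 = 0" using assms by (auto simp: gbar1_def)
  have h: "high 1 (toR x)" "high 1 (toR y)" using z by (simp_all add: high1_iff)
  have "GV G (BCHR (toR x) (toR y))"
    by (rule BCH_Lie[OF dsum_subG[OF assms(1)] dsum_lie[OF assms(1)] h])
       (use assms in \<open>auto simp: GV_toR gbar1_def\<close>)
  moreover have "BCHR (toR x) (toR y) $ 0 $ 0 = 0" using BCHR_high1[OF h] by (simp add: high1_iff)
  moreover have "toR (BCH sc x y) = BCHR (toR x) (toR y)" by (rule BCH_toR[of x y]) (use z in auto)
  ultimately show ?thesis by (simp add: gbar1_def GV_toR[symmetric]) (metis toR_nth)
qed

lemma BCH_agree: assumes "x 0 0 = 0" "y 0 0 = 0" "x' 0 0 = 0" "y' 0 0 = 0" "agree d x x'" "agree d y y'"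
  shows "agree (Suc d) (BCH sc x y) (BCH sc x' y')"
  using assms unfolding agree_cong2 by (simp add: BCH_toR BCHR_local high1_iff)

lemma BCH_00: assumes "x 0 0 = 0" "y 0 0 = 0" shows "BCH sc x y 0 0 = 0"
proof -
  have "toR (BCH sc x y) = BCHR (toR x) (toR y)" by (rule BCH_toR[of x y]) (use assms in auto)
  moreover have "high 1 (BCHR (toR x) (toR y))" using assms by (intro BCHR_high1) (simp_all add: high1_iff)
  ultimately show ?thesis by (metis high1_iff toR_nth)
qed

lemma BCH_line: assumes gl: "goodline P" "x 0 0 = 0" "y 0 0 = 0"
  and v: "(\<forall>i j. P i j \<longrightarrow> x i j = 0) \<or> (\<forall>i j. P i j \<longrightarrow> y i j = 0)" and "P i j"
  shows "BCH sc x y i j = 0"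
proof -
  have "BCHR (toR x) (toR y) $ i $ j = 0"
    using v assms by (intro BCHR_line_vanish[of P _ _ "i + j"]) (auto simp: high1_iff)
  moreover have "toR (BCH sc x y) = BCHR (toR x) (toR y)" by (rule BCH_toR[of x y]) (use assms in auto)
  ultimately show ?thesis by (metis toR_nth)
qed

lemma Pbar_in: "dsum G A B \<Longrightarrow> f \<in> gbar G \<Longrightarrow> Pbar A B f \<in> gbar A"
  using proj_in by (auto simp: Pbar_def gbar_def)
lemma Ptbar_in: "dsum G A B \<Longrightarrow> f \<in> gbar G \<Longrightarrow> Ptbar A B f \<in> gbar B"
  using proj_in by (auto simp: Ptbar_def gbar_def)
lemma Pbar_00: "dsum G A B \<Longrightarrow> f 0 0 = 0 \<Longrightarrow> Pbar A B f 0 0 = 0"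
  by (simp add: Pbar_def proj_0)
lemma Ptbar_00: "dsum G A B \<Longrightarrow> f 0 0 = 0 \<Longrightarrow> Ptbar A B f 0 0 = 0"
  by (simp add: Ptbar_def proj_0)
lemma Pbar_G: assumes "dsum G A B" "f \<in> gbar1 G" shows "Pbar A B f \<in> gbar1 G"
proof -
  have "Pbar A B f \<in> gbar A" using Pbar_in assms by (simp add: gbar1_def)
  then have "Pbar A B f \<in> gbar G" using dsum_AG[OF assms(1)] by (auto simp: gbar_def)
  then show ?thesis using Pbar_00[OF assms(1)] assms(2) by (simp add: gbar1_def)
qed
lemma Ptbar_G: assumes "dsum G A B" "f \<in> gbar1 G" shows "Ptbar A B f \<in> gbar1 G"
proof -
  have "Ptbar A B f \<in> gbar B" using Ptbar_in assms by (simp add: gbar1_def)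
  then have "Ptbar A B f \<in> gbar G" using dsum_BG[OF assms(1)] by (auto simp: gbar_def)
  then show ?thesis using Ptbar_00[OF assms(1)] assms(2) by (simp add: gbar1_def)
qed
lemma Pbar_agree: "agree d f g \<Longrightarrow> agree d (Pbar A B f) (Pbar A B g)"
  by (simp add: agree_def Pbar_def)
lemma Ptbar_agree: "agree d f g \<Longrightarrow> agree d (Ptbar A B f) (Ptbar A B g)"
  by (simp add: agree_def Ptbar_def)
lemma fsub_G: "subspace_k sc G \<Longrightarrow> f \<in> gbar1 G \<Longrightarrow> g \<in> gbar1 G \<Longrightarrow> fsub f g \<in> gbar1 G"
  by (simp add: gbar1_def gbar_def fsub_def sub_diff)
lemma fadd_G: "subspace_k sc G \<Longrightarrow> f \<in> gbar1 G \<Longrightarrow> g \<in> gbar1 G \<Longrightarrow> fadd f g \<in> gbar1 G"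
  by (simp add: gbar1_def gbar_def fadd_def sub_add)

lemma agree_nth: "agree (Suc (i + j)) f g \<Longrightarrow> f i j = g i j" by (simp add: agree_def)
lemma agree_mono: "d \<le> e \<Longrightarrow> agree e f g \<Longrightarrow> agree d f g" by (auto simp: agree_def)
lemma agree_trans: "agree d f g \<Longrightarrow> agree d g h \<Longrightarrow> agree d f h" by (auto simp: agree_def)
lemma agree_sym: "agree d f g \<Longrightarrow> agree d g f" by (auto simp: agree_def)


context
  fixes G A B v
  assumes ds: "dsum G A B" and vG: "v \<in> gbar1 G"
begin

lemma subG: "subspace_k sc G" by (rule dsum_subG[OF ds])

lemma ci_G: "chi_iter sc A B v n \<in> gbar1 G"
proof (induct n)
  case (Suc n)
  then show ?case
    by (simp only: chi_iter.simps) (intro fsub_G[OF subG] vG BCH_G[OF ds] Pbar_G[OF ds] Ptbar_G[OF ds])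
qed (simp add: vG)

lemma ci_00: "chi_iter sc A B v n 0 0 = 0" using ci_G by (simp add: gbar1_def)

lemma ci_step: "agree (Suc n) (chi_iter sc A B v (Suc n)) (chi_iter sc A B v n)"
proof (induct n)
  case 0
  have "BCH sc (Pbar A B v) (Ptbar A B v) 0 0 = 0"
    using vG ds by (intro BCH_00 Pbar_00 Ptbar_00) (auto simp: gbar1_def)
  then show ?case by (simp add: agree_def fsub_def)
next
  case (Suc n)
  let ?c = "chi_iter sc A B v"
  have "agree (Suc (Suc n)) (BCH sc (Pbar A B (?c (Suc n))) (Ptbar A B (?c (Suc n))))
      (BCH sc (Pbar A B (?c n)) (Ptbar A B (?c n)))"
    by (intro BCH_agree Pbar_agree Ptbar_agree Suc Pbar_00[OF ds] Ptbar_00[OF ds] ci_00)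
  then show ?case by (simp add: agree_def fsub_def)
qed

lemma ci_mono: "n \<le> m \<Longrightarrow> agree (Suc n) (chi_iter sc A B v m) (chi_iter sc A B v n)"
proof (induct m)
  case (Suc m)
  show ?case
  proof (cases "n = Suc m")
    case False
    then have "agree (Suc n) (chi_iter sc A B v m) (chi_iter sc A B v n)" using Suc by simp
    moreover have "agree (Suc n) (chi_iter sc A B v (Suc m)) (chi_iter sc A B v m)"
      using ci_step[of m] agree_mono[of "Suc n" "Suc m"] False Suc(2) by simp
    ultimately show ?thesis using agree_trans by blast
  qed (simp add: agree_def)
qed (simp add: agree_def)


lemma chi_nth: "chi sc A B v i j = chi_iter sc A B v (i + j) i j"
  unfolding chi_def
proof (rule the_equality)
  show "\<exists>N. \<forall>n\<ge>N. chi_iter sc A B v n i j = chi_iter sc A B v (i + j) i j"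
  proof (intro exI allI impI)
    fix n assume "i + j \<le> n"
    then have "agree (Suc (i + j)) (chi_iter sc A B v n) (chi_iter sc A B v (i + j))" by (rule ci_mono)
    then show "chi_iter sc A B v n i j = chi_iter sc A B v (i + j) i j" by (rule agree_nth)
  qed
next
  fix w assume "\<exists>N. \<forall>n\<ge>N. chi_iter sc A B v n i j = w"
  then obtain N where N: "\<forall>n\<ge>N. chi_iter sc A B v n i j = w" by blast
  have "agree (Suc (i + j)) (chi_iter sc A B v (max N (i + j))) (chi_iter sc A B v (i + j))"
    by (rule ci_mono) simp
  then have "chi_iter sc A B v (max N (i + j)) i j = chi_iter sc A B v (i + j) i j" by (rule agree_nth)
  then show "w = chi_iter sc A B v (i + j) i j" using N by simp
qed

lemma chi_agree: "agree (Suc n) (chi sc A B v) (chi_iter sc A B v n)"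
  unfolding agree_def
proof (intro allI impI)
  fix i j assume "i + j < Suc n"
  then have "agree (Suc (i + j)) (chi_iter sc A B v n) (chi_iter sc A B v (i + j))" by (intro ci_mono) simp
  then show "chi sc A B v i j = chi_iter sc A B v n i j"
    using agree_nth chi_nth by metis
qed

lemma chi_G: "chi sc A B v \<in> gbar1 G"
  using ci_G vG by (simp add: gbar1_def gbar_def chi_nth)

lemma chi_fix: "chi sc A B v = fsub v (BCH sc (Pbar A B (chi sc A B v)) (Ptbar A B (chi sc A B v)))"
proof (rule ext, rule ext)
  fix i j :: nat
  let ?c = "chi sc A B v" and ?n = "i + j"
  have c00: "?c 0 0 = 0" using chi_G by (simp add: gbar1_def)
  have "agree (Suc (Suc ?n)) (BCH sc (Pbar A B ?c) (Ptbar A B ?c))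
      (BCH sc (Pbar A B (chi_iter sc A B v ?n)) (Ptbar A B (chi_iter sc A B v ?n)))"
    by (intro BCH_agree Pbar_agree Ptbar_agree chi_agree Pbar_00[OF ds] Ptbar_00[OF ds] ci_00 c00)
  then have "BCH sc (Pbar A B ?c) (Ptbar A B ?c) i j =
      BCH sc (Pbar A B (chi_iter sc A B v ?n)) (Ptbar A B (chi_iter sc A B v ?n)) i j"
    by (simp add: agree_def)
  moreover have "?c i j = chi_iter sc A B v (Suc ?n) i j"
    using chi_agree[of "Suc ?n"] by (simp add: agree_def)
  ultimately show "?c i j = fsub v (BCH sc (Pbar A B ?c) (Ptbar A B ?c)) i j"
    by (simp add: fsub_def)
qed


lemma chi_line: assumes gl: "goodline P"
  shows "((\<forall>i j. P i j \<longrightarrow> v i j \<in> B) \<longrightarrow> (\<forall>i j. P i j \<longrightarrow> Pbar A B (chi sc A B v) i j = 0))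
       \<and> ((\<forall>i j. P i j \<longrightarrow> v i j \<in> A) \<longrightarrow> (\<forall>i j. P i j \<longrightarrow> Ptbar A B (chi sc A B v) i j = 0))"
proof -
  let ?c = "chi sc A B v"
  let ?X = "Pbar A B ?c" and ?Y = "Ptbar A B ?c"
  have c00: "?c 0 0 = 0" using chi_G by (simp add: gbar1_def)
  have X00: "?X 0 0 = 0" and Y00: "?Y 0 0 = 0" using c00 Pbar_00[OF ds] Ptbar_00[OF ds] by auto
  have cij: "?c i j = v i j - BCH sc ?X ?Y i j" for i j using fun_cong[OF fun_cong[OF chi_fix, of i], of j]
    by (simp add: fsub_def)
  have sA: "subspace_k sc A" and sB: "subspace_k sc B" using ds by (auto simp: dsum_def)
  have vGij: "v i j \<in> G" for i j using vG by (simp add: gbar1_def gbar_def)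
  show ?thesis
  proof (intro conjI impI)
    assume vB: "\<forall>i j. P i j \<longrightarrow> v i j \<in> B"
    have "\<forall>i j. P i j \<and> i + j < d \<longrightarrow> ?X i j = 0" for d
    proof (induct d)
      case (Suc d)
      show ?case
      proof (intro allI impI)
        fix i j assume ij: "P i j \<and> i + j < Suc d"
        have "BCH sc ?X ?Y i j = 0"
        proof -
          have "BCHR (toR ?X) (toR ?Y) $ i $ j = 0"
            using Suc ij gl X00 Y00 by (intro BCHR_line_vanish[of P _ _ d]) (auto simp: high1_iff)
          moreover have "toR (BCH sc ?X ?Y) = BCHR (toR ?X) (toR ?Y)" by (rule BCH_toR) (use X00 Y00 in auto)
          ultimately show ?thesis by (metis toR_nth)
        qed
        then have "?c i j = v i j" using cij by simp
        then show "?X i j = 0" using vB ij proj_B[OF ds] by (simp add: Pbar_def)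
      qed
    qed simp
    then show "\<forall>i j. P i j \<longrightarrow> ?X i j = 0" by (meson less_add_Suc1)
  next
    assume vA: "\<forall>i j. P i j \<longrightarrow> v i j \<in> A"
    have "\<forall>i j. P i j \<and> i + j < d \<longrightarrow> ?Y i j = 0" for d
    proof (induct d)
      case (Suc d)
      show ?case
      proof (intro allI impI)
        fix i j assume ij: "P i j \<and> i + j < Suc d"
        have "BCH sc ?X ?Y i j = 0"
        proof -
          have "BCHR (toR ?X) (toR ?Y) $ i $ j = 0"
            using Suc ij gl X00 Y00 by (intro BCHR_line_vanish[of P _ _ d]) (auto simp: high1_iff)
          moreover have "toR (BCH sc ?X ?Y) = BCHR (toR ?X) (toR ?Y)" by (rule BCH_toR) (use X00 Y00 in auto)
          ultimately show ?thesis by (metis toR_nth)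
        qed
        then have "?c i j = v i j" using cij by simp
        then show "?Y i j = 0" using vA ij proj_A[OF ds] by (simp add: Ptbar_def)
      qed
    qed simp
    then show "\<forall>i j. P i j \<longrightarrow> ?Y i j = 0" by (meson less_add_Suc1)
  qed
qed

lemma chi_Cmap: "Cmap sc (Pbar A B (chi sc A B v)) (Ptbar A B (chi sc A B v)) = v"
proof (rule ext, rule ext)
  fix i j :: nat
  let ?c = "chi sc A B v"
  have "?c i j = v i j - BCH sc (Pbar A B ?c) (Ptbar A B ?c) i j"
    using fun_cong[OF fun_cong[OF chi_fix, of i], of j] by (simp add: fsub_def)
  then show "Cmap sc (Pbar A B ?c) (Ptbar A B ?c) i j = v i j"
    by (simp add: Cmap_def fadd_def Pbar_def Ptbar_def)
qed

end


lemma sG_props: "f \<in> sG S \<Longrightarrow> f \<in> gbar S \<and> f 0 0 = 0 \<and> (\<forall>j. f 0 j = 0)"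
  by (simp add: sG_def gbar_def)
lemma tG_props: "f \<in> tG S \<Longrightarrow> f \<in> gbar S \<and> f 0 0 = 0 \<and> (\<forall>i. f i 0 = 0)"
  by (simp add: tG_def gbar_def)

lemma gbar1_of_A: "dsum G A B \<Longrightarrow> f \<in> gbar A \<Longrightarrow> f 0 0 = 0 \<Longrightarrow> f \<in> gbar1 G"
  using dsum_AG by (auto simp: gbar1_def gbar_def)
lemma gbar1_of_B: "dsum G A B \<Longrightarrow> f \<in> gbar B \<Longrightarrow> f 0 0 = 0 \<Longrightarrow> f \<in> gbar1 G"
  using dsum_BG by (auto simp: gbar1_def gbar_def)

lemma Cmap_inj: assumes ds: "dsum G A B" and x: "x \<in> gbar A" "x 0 0 = 0" and x': "x' \<in> gbar A" "x' 0 0 = 0"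
  and y: "y \<in> gbar B" "y 0 0 = 0" and y': "y' \<in> gbar B" "y' 0 0 = 0"
  and eq: "Cmap sc x y = Cmap sc x' y'"
  shows "x = x' \<and> y = y'"
proof -
  have sA: "subspace_k sc A" and sB: "subspace_k sc B" and d: "A \<inter> B = {0}"
    using dsum_subA[OF ds] dsum_subB[OF ds] dsum_direct[OF ds] by auto
  have "agree d x x' \<and> agree d y y'" for d
  proof (induct d)
    case 0 then show ?case by (simp add: agree_def)
  next
    case (Suc d)
    then have "agree (Suc d) (BCH sc x y) (BCH sc x' y')" using x x' y y' by (intro BCH_agree) auto
    have "x i j = x' i j \<and> y i j = y' i j" if ij: "i + j < Suc d" for i j
    proof -
      have "BCH sc x y i j = BCH sc x' y' i j" using \<open>agree (Suc d) _ _\<close> ij by (simp add: agree_def)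
      moreover have "Cmap sc x y i j = Cmap sc x' y' i j" using eq by simp
      ultimately have e: "x i j - x' i j = y' i j - y i j" by (simp add: Cmap_def fadd_def algebra_simps)
      have "x i j - x' i j \<in> A" using x x' sub_diff[OF sA] by (simp add: gbar_def)
      moreover have "y' i j - y i j \<in> B" using y y' sub_diff[OF sB] by (simp add: gbar_def)
      ultimately have "x i j - x' i j \<in> A \<inter> B" using e by simp
      then have "x i j - x' i j = 0" using d by blast
      then show ?thesis using e by simp
    qed
    then show ?case by (simp add: agree_def)
  qed
  then show ?thesis by (metis agree_nth ext)
qed

lemma Vset_char: assumes ds: "dsum G Gm Gp"
  shows "Vset Gm Gp = {f. f \<in> gbar1 G \<and> (\<forall>i. f i 0 \<in> Gm) \<and> (\<forall>j. f 0 j \<in> Gp)}"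
proof (rule set_eqI, rule iffI)
  fix f assume "f \<in> Vset Gm Gp"
  then obtain a b where f: "f = fadd a b" and a: "a \<in> sG Gm" and b: "b \<in> tG Gp" by (auto simp: Vset_def)
  have "a i j + b i j \<in> G" for i j
  proof -
    have "a i j \<in> Gm" "b i j \<in> Gp" using a b by (auto simp: sG_def tG_def)
    then show ?thesis using dsum_decomp[OF ds] by blast
  qed
  moreover have "f 0 0 = 0" using a b f by (simp add: sG_def tG_def fadd_def)
  moreover have "f i 0 \<in> Gm" for i using a b f by (simp add: sG_def tG_def fadd_def)
  moreover have "f 0 j \<in> Gp" for j using a b f by (simp add: sG_def tG_def fadd_def)
  ultimately show "f \<in> {f. f \<in> gbar1 G \<and> (\<forall>i. f i 0 \<in> Gm) \<and> (\<forall>j. f 0 j \<in> Gp)}"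
    using f by (simp add: gbar1_def gbar_def fadd_def)
next
  fix f assume "f \<in> {f. f \<in> gbar1 G \<and> (\<forall>i. f i 0 \<in> Gm) \<and> (\<forall>j. f 0 j \<in> Gp)}"
  then have fG: "\<And>i j. f i j \<in> G" and f00: "f 0 0 = 0" and fm: "\<And>i. f i 0 \<in> Gm" and fp: "\<And>j. f 0 j \<in> Gp"
    by (auto simp: gbar1_def gbar_def)
  define a where "a i j = (if i = 0 then 0 else if j = 0 then f i 0 else proj Gm Gp (f i j))" for i j
  define b where "b i j = f i j - a i j" for i j
  have sm: "subspace_k sc Gm" and sp: "subspace_k sc Gp" using dsum_subA[OF ds] dsum_subB[OF ds] by auto
  have "a \<in> sG Gm" using proj_in[OF ds fG] fm sub_zero[OF sm] by (simp add: sG_def a_def)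
  moreover have "b \<in> tG Gp"
    unfolding tG_def b_def a_def using proj_in[OF ds fG] fp f00 sub_zero[OF sp] by auto
  moreover have "f = fadd a b" by (simp add: fadd_def b_def)
  ultimately show "f \<in> Vset Gm Gp" by (auto simp: Vset_def)
qed

lemma fexp_Cmap: assumes "x 0 0 = 0" "y 0 0 = 0"
  shows "fmul (fexp sc x) (fexp sc y) = fexp sc (Cmap sc x y)"
proof -
  have h: "high 1 (toR x)" "high 1 (toR y)" using assms by (simp_all add: high1_iff)
  have "toR (BCH sc x y) = BCHR (toR x) (toR y)" by (rule BCH_toR) (use assms in auto)
  then show ?thesis using BCHR_isBCH[OF h]
    by (simp add: toR_eq_iff[symmetric] toR_fmul toR_fexp Cmap_def toR_fadd isBCH_def)
qed

lemma fexp_inj: assumes "a 0 0 = 0" "b 0 0 = 0" "fexp sc a = fexp sc b" shows "a = b"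
  using EXP_inj[of "toR a" "toR b"] assms by (simp add: high1_iff toR_fexp[symmetric] toR_eq_iff)

lemma Cmap_00: "x 0 0 = 0 \<Longrightarrow> y 0 0 = 0 \<Longrightarrow> Cmap sc x y 0 0 = 0"
  by (simp add: Cmap_def fadd_def BCH_00)


lemma C_in_V: assumes ds: "dsum G Gm Gp" and am: "am \<in> sG Gm" and ap: "ap \<in> tG Gp"
  shows "Cmap sc am ap \<in> Vset Gm Gp"
proof -
  have am': "am \<in> gbar Gm" "am 0 0 = 0" "\<And>j. am 0 j = 0" using sG_props[OF am] by auto
  have ap': "ap \<in> gbar Gp" "ap 0 0 = 0" "\<And>i. ap i 0 = 0" using tG_props[OF ap] by auto
  have g1: "am \<in> gbar1 G" "ap \<in> gbar1 G" using gbar1_of_A[OF ds] gbar1_of_B[OF ds] am' ap' by auto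
  have "Cmap sc am ap \<in> gbar1 G" unfolding Cmap_def
    by (intro fadd_G[OF dsum_subG[OF ds]] BCH_G[OF ds] g1)
  moreover have "BCH sc am ap i 0 = 0" for i
    by (rule BCH_line[OF goodline_t]) (use am' ap' in auto)
  moreover have "BCH sc am ap 0 j = 0" for j
    by (rule BCH_line[OF goodline_s]) (use am' ap' in auto)
  ultimately show ?thesis using am' ap' unfolding Vset_char[OF ds]
    by (simp add: Cmap_def fadd_def gbar_def)
qed

lemma C_in_V': assumes ds: "dsum G Gm Gp" and ap: "ap \<in> tG Gp" and am: "am \<in> sG Gm"
  shows "Cmap sc ap am \<in> Vset Gm Gp"
proof -
  have am': "am \<in> gbar Gm" "am 0 0 = 0" "\<And>j. am 0 j = 0" using sG_props[OF am] by auto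
  have ap': "ap \<in> gbar Gp" "ap 0 0 = 0" "\<And>i. ap i 0 = 0" using tG_props[OF ap] by auto
  have g1: "am \<in> gbar1 G" "ap \<in> gbar1 G" using gbar1_of_A[OF ds] gbar1_of_B[OF ds] am' ap' by auto
  have "Cmap sc ap am \<in> gbar1 G" unfolding Cmap_def
    by (intro fadd_G[OF dsum_subG[OF ds]] BCH_G[OF ds] g1)
  moreover have "BCH sc ap am i 0 = 0" for i
    by (rule BCH_line[OF goodline_t]) (use am' ap' in auto)
  moreover have "BCH sc ap am 0 j = 0" for j
    by (rule BCH_line[OF goodline_s]) (use am' ap' in auto)
  ultimately show ?thesis using am' ap' unfolding Vset_char[OF ds]
    by (simp add: Cmap_def fadd_def gbar_def)
qed

lemma DP_U: assumes ds: "dsum G Gm Gp" and v: "v \<in> Vset Gm Gp"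
  shows "DP sc Gm Gp v \<in> sG Gm \<times> tG Gp \<and> Cmap sc (fst (DP sc Gm Gp v)) (snd (DP sc Gm Gp v)) = v"
proof -
  have vG: "v \<in> gbar1 G" and v1: "\<And>i. v i 0 \<in> Gm" and v2: "\<And>j. v 0 j \<in> Gp"
    using v unfolding Vset_char[OF ds] by auto
  let ?c = "chi sc Gm Gp v"
  have cG: "?c \<in> gbar1 G" by (rule chi_G[OF ds vG])
  have l1: "\<forall>i j. i = 0 \<longrightarrow> Pbar Gm Gp ?c i j = 0"
    using chi_line[OF ds vG goodline_s] v2 by auto
  have l2: "\<forall>i j. j = 0 \<longrightarrow> Ptbar Gm Gp ?c i j = 0"
    using chi_line[OF ds vG goodline_t] v1 by auto
  have "Pbar Gm Gp ?c \<in> gbar Gm" "Ptbar Gm Gp ?c \<in> gbar Gp"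
    using Pbar_in[OF ds] Ptbar_in[OF ds] cG by (auto simp: gbar1_def)
  then have "Pbar Gm Gp ?c \<in> sG Gm" "Ptbar Gm Gp ?c \<in> tG Gp" using l1 l2 by (auto simp: sG_def tG_def gbar_def)
  then show ?thesis using chi_Cmap[OF ds vG] by (simp add: DP_def)
qed

lemma swap_exists: assumes ds: "dsum G Gm Gp" and v: "v \<in> Vset Gm Gp"
  shows "\<exists>ap\<in>tG Gp. \<exists>am\<in>sG Gm. Cmap sc ap am = v"
proof -
  have ds': "dsum G Gp Gm" by (rule dsum_swap[OF ds])
  have vG: "v \<in> gbar1 G" and v1: "\<And>i. v i 0 \<in> Gm" and v2: "\<And>j. v 0 j \<in> Gp"
    using v unfolding Vset_char[OF ds] by auto
  let ?c = "chi sc Gp Gm v"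
  have cG: "?c \<in> gbar1 G" by (rule chi_G[OF ds' vG])
  have l1: "\<forall>i j. j = 0 \<longrightarrow> Pbar Gp Gm ?c i j = 0"
    using chi_line[OF ds' vG goodline_t] v1 by auto
  have l2: "\<forall>i j. i = 0 \<longrightarrow> Ptbar Gp Gm ?c i j = 0"
    using chi_line[OF ds' vG goodline_s] v2 by auto
  have "Pbar Gp Gm ?c \<in> gbar Gp" "Ptbar Gp Gm ?c \<in> gbar Gm"
    using Pbar_in[OF ds'] Ptbar_in[OF ds'] cG by (auto simp: gbar1_def)
  then have "Pbar Gp Gm ?c \<in> tG Gp" "Ptbar Gp Gm ?c \<in> sG Gm" using l1 l2 by (auto simp: sG_def tG_def gbar_def)
  then show ?thesis using chi_Cmap[OF ds' vG] by blast
qed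

lemma injU: assumes ds: "dsum G Gm Gp" and "p \<in> sG Gm \<times> tG Gp" "q \<in> sG Gm \<times> tG Gp"
  and "Cmap sc (fst p) (snd p) = Cmap sc (fst q) (snd q)" shows "p = q"
proof -
  have "fst p = fst q \<and> snd p = snd q"
    using assms(2-4) by (intro Cmap_inj[OF ds]) (auto dest: sG_props tG_props)
  then show ?thesis by (simp add: prod_eq_iff)
qed

lemma injD: assumes ds: "dsum G Gm Gp" and "p \<in> tG Gp \<times> sG Gm" "q \<in> tG Gp \<times> sG Gm"
  and "Cmap sc (fst p) (snd p) = Cmap sc (fst q) (snd q)" shows "p = q"
proof -
  have "fst p = fst q \<and> snd p = snd q"
    using assms(2-4) by (intro Cmap_inj[OF dsum_swap[OF ds]]) (auto dest: sG_props tG_props)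
  then show ?thesis by (simp add: prod_eq_iff)
qed

end

theorem theorem4p3:
  fixes sc :: "'k::field_char_0 \<Rightarrow> 'a::ring_1 \<Rightarrow> 'a"
    and G Gm Gp :: "'a set"
  assumes alg: "kalg sc"
    and G_sub: "subspace_k sc G"
    and G_lie: "\<forall>x\<in>G. \<forall>y\<in>G. x * y - y * x \<in> G"
    and Gm_sub: "subspace_k sc Gm"
    and Gp_sub: "subspace_k sc Gp"
    and direct: "Gm \<inter> Gp = {0}"
    and decomp: "G = {m + p | m p. m \<in> Gm \<and> p \<in> Gp}"
  shows
    "bij_betw (\<lambda>(am, ap). Cmap sc am ap) (sG Gm \<times> tG Gp) (Vset Gm Gp)
     \<and> (\<forall>v\<in>Vset Gm Gp. DP sc Gm Gp v \<in> sG Gm \<times> tG Gp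
          \<and> Cmap sc (fst (DP sc Gm Gp v)) (snd (DP sc Gm Gp v)) = v)
     \<and> (\<forall>ap\<in>tG Gp. \<forall>am\<in>sG Gm. Cmap sc ap am \<in> gbar1 G)
     \<and> bij_betw (Psi sc Gm Gp) (tG Gp \<times> sG Gm) (sG Gm \<times> tG Gp)
     \<and> (\<forall>ap\<in>tG Gp. \<forall>am\<in>sG Gm.
          fmul (fexp sc ap) (fexp sc am)
          = fmul (fexp sc (fst (Psi sc Gm Gp (ap, am)))) (fexp sc (snd (Psi sc Gm Gp (ap, am)))))
     \<and> (\<forall>\<Phi>. bij_betw \<Phi> (tG Gp \<times> sG Gm) (sG Gm \<times> tG Gp)
          \<and> (\<forall>ap\<in>tG Gp. \<forall>am\<in>sG Gm.
               fmul (fexp sc ap) (fexp sc am)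
               = fmul (fexp sc (fst (\<Phi> (ap, am)))) (fexp sc (snd (\<Phi> (ap, am)))))
          \<longrightarrow> (\<forall>x\<in>tG Gp \<times> sG Gm. \<Phi> x = Psi sc Gm Gp x))"
proof -
  interpret kalg_loc sc by unfold_locales (rule alg)
  have ds: "dsum G Gm Gp" unfolding dsum_def using assms by blast
  let ?U = "sG Gm \<times> tG Gp" and ?V = "Vset Gm Gp" and ?D = "tG Gp \<times> sG Gm"
  have zU: "fst p 0 0 = 0 \<and> snd p 0 0 = 0" if "p \<in> ?U" for p
    using that sG_props tG_props by (auto simp: mem_Times_iff)
  have zD: "fst p 0 0 = 0 \<and> snd p 0 0 = 0" if "p \<in> ?D" for p
    using that sG_props tG_props by (auto simp: mem_Times_iff)
  have c1: "bij_betw (\<lambda>(am, ap). Cmap sc am ap) ?U ?V"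
    unfolding bij_betw_def
  proof
    show "inj_on (\<lambda>(am, ap). Cmap sc am ap) ?U"
    proof (rule inj_onI)
      fix p q assume pq: "p \<in> ?U" "q \<in> ?U" "(\<lambda>(am, ap). Cmap sc am ap) p = (\<lambda>(am, ap). Cmap sc am ap) q"
      then have "Cmap sc (fst p) (snd p) = Cmap sc (fst q) (snd q)" by (simp add: case_prod_beta)
      then show "p = q" by (rule injU[OF ds pq(1,2)])
    qed
    show "(\<lambda>(am, ap). Cmap sc am ap) ` ?U = ?V"
    proof
      show "(\<lambda>(am, ap). Cmap sc am ap) ` ?U \<subseteq> ?V" using C_in_V[OF ds] by auto
      show "?V \<subseteq> (\<lambda>(am, ap). Cmap sc am ap) ` ?U"
      proof
        fix v assume v: "v \<in> ?V"
        have "DP sc Gm Gp v \<in> ?U" and e: "Cmap sc (fst (DP sc Gm Gp v)) (snd (DP sc Gm Gp v)) = v"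
          using DP_U[OF ds v] by auto
        moreover have "v = (\<lambda>(am, ap). Cmap sc am ap) (DP sc Gm Gp v)" using e by (simp add: case_prod_beta)
        ultimately show "v \<in> (\<lambda>(am, ap). Cmap sc am ap) ` ?U" by (intro image_eqI)
      qed
    qed
  qed
  have c2: "\<forall>v\<in>?V. DP sc Gm Gp v \<in> ?U \<and> Cmap sc (fst (DP sc Gm Gp v)) (snd (DP sc Gm Gp v)) = v"
    using DP_U[OF ds] by blast
  have c3: "\<forall>ap\<in>tG Gp. \<forall>am\<in>sG Gm. Cmap sc ap am \<in> gbar1 G"
    using C_in_V'[OF ds] unfolding Vset_char[OF ds] by blast
  have PsiU: "Psi sc Gm Gp x \<in> ?U \<and> Cmap sc (fst (Psi sc Gm Gp x)) (snd (Psi sc Gm Gp x)) = Cmap sc (fst x) (snd x)"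
    if "x \<in> ?D" for x
  proof -
    have "Cmap sc (fst x) (snd x) \<in> ?V" using that C_in_V'[OF ds] by (auto simp: mem_Times_iff)
    then show ?thesis using DP_U[OF ds] by (simp add: Psi_def)
  qed
  have c4: "bij_betw (Psi sc Gm Gp) ?D ?U"
    unfolding bij_betw_def
  proof
    show "inj_on (Psi sc Gm Gp) ?D"
    proof (rule inj_onI)
      fix p q assume pq: "p \<in> ?D" "q \<in> ?D" "Psi sc Gm Gp p = Psi sc Gm Gp q"
      have "Cmap sc (fst p) (snd p) = Cmap sc (fst (Psi sc Gm Gp p)) (snd (Psi sc Gm Gp p))"
        using PsiU[OF pq(1)] by simp
      also have "\<dots> = Cmap sc (fst (Psi sc Gm Gp q)) (snd (Psi sc Gm Gp q))" using pq(3) by simp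
      also have "\<dots> = Cmap sc (fst q) (snd q)" using PsiU[OF pq(2)] by simp
      finally have "Cmap sc (fst p) (snd p) = Cmap sc (fst q) (snd q)" .
      then show "p = q" by (rule injD[OF ds pq(1,2)])
    qed
    show "Psi sc Gm Gp ` ?D = ?U"
    proof
      show "Psi sc Gm Gp ` ?D \<subseteq> ?U"
      proof (rule image_subsetI)
        fix x assume "x \<in> ?D"
        then show "Psi sc Gm Gp x \<in> ?U" using PsiU by blast
      qed
      show "?U \<subseteq> Psi sc Gm Gp ` ?D"
      proof
        fix u assume u: "u \<in> ?U"
        have "Cmap sc (fst u) (snd u) \<in> ?V" using u C_in_V[OF ds] by (auto simp: mem_Times_iff)
        then obtain ap am where ap: "ap \<in> tG Gp" and am: "am \<in> sG Gm" and e: "Cmap sc ap am = Cmap sc (fst u) (snd u)"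
          using swap_exists[OF ds] by blast
        have x: "(ap, am) \<in> ?D" using ap am by simp
        have "Psi sc Gm Gp (ap, am) = u"
          using PsiU[OF x] e by (intro injU[OF ds _ u]) auto
        then show "u \<in> Psi sc Gm Gp ` ?D" using x by (intro image_eqI[of u _ "(ap, am)"]) simp_all
      qed
    qed
  qed
  have c5: "\<forall>ap\<in>tG Gp. \<forall>am\<in>sG Gm.
          fmul (fexp sc ap) (fexp sc am)
          = fmul (fexp sc (fst (Psi sc Gm Gp (ap, am)))) (fexp sc (snd (Psi sc Gm Gp (ap, am))))"
  proof (intro ballI)
    fix ap am assume ap: "ap \<in> tG Gp" and am: "am \<in> sG Gm"
    have x: "(ap, am) \<in> ?D" using ap am by simp
    have "fmul (fexp sc ap) (fexp sc am) = fexp sc (Cmap sc ap am)"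
      using zD[OF x] by (intro fexp_Cmap) auto
    also have "\<dots> = fexp sc (Cmap sc (fst (Psi sc Gm Gp (ap, am))) (snd (Psi sc Gm Gp (ap, am))))"
      using PsiU[OF x] by simp
    also have "\<dots> = fmul (fexp sc (fst (Psi sc Gm Gp (ap, am)))) (fexp sc (snd (Psi sc Gm Gp (ap, am))))"
      using zU PsiU[OF x] by (intro fexp_Cmap[symmetric]) auto
    finally show "fmul (fexp sc ap) (fexp sc am)
          = fmul (fexp sc (fst (Psi sc Gm Gp (ap, am)))) (fexp sc (snd (Psi sc Gm Gp (ap, am))))" .
  qed
  have c6: "\<forall>\<Phi>. bij_betw \<Phi> ?D ?U
          \<and> (\<forall>ap\<in>tG Gp. \<forall>am\<in>sG Gm.
               fmul (fexp sc ap) (fexp sc am)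
               = fmul (fexp sc (fst (\<Phi> (ap, am)))) (fexp sc (snd (\<Phi> (ap, am)))))
          \<longrightarrow> (\<forall>x\<in>?D. \<Phi> x = Psi sc Gm Gp x)"
  proof (intro allI impI ballI)
    fix \<Phi> x
    assume H: "bij_betw \<Phi> ?D ?U \<and> (\<forall>ap\<in>tG Gp. \<forall>am\<in>sG Gm.
               fmul (fexp sc ap) (fexp sc am)
               = fmul (fexp sc (fst (\<Phi> (ap, am)))) (fexp sc (snd (\<Phi> (ap, am)))))"
    assume x: "x \<in> ?D"
    obtain ap am where xe: "x = (ap, am)" by (cases x)
    have ap: "ap \<in> tG Gp" and am: "am \<in> sG Gm" using x xe by auto
    have Px: "\<Phi> x \<in> ?U" using H x bij_betwE by blast
    have "fexp sc (Cmap sc (fst (\<Phi> x)) (snd (\<Phi> x))) = fmul (fexp sc (fst (\<Phi> x))) (fexp sc (snd (\<Phi> x)))"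
      using zU[OF Px] by (intro fexp_Cmap[symmetric]) auto
    also have "\<dots> = fmul (fexp sc ap) (fexp sc am)" using H ap am xe by simp
    also have "\<dots> = fmul (fexp sc (fst (Psi sc Gm Gp x))) (fexp sc (snd (Psi sc Gm Gp x)))"
      using c5 ap am xe by simp
    also have "\<dots> = fexp sc (Cmap sc (fst (Psi sc Gm Gp x)) (snd (Psi sc Gm Gp x)))"
      using zU PsiU[OF x] by (intro fexp_Cmap) auto
    finally have fe: "fexp sc (Cmap sc (fst (\<Phi> x)) (snd (\<Phi> x))) = fexp sc (Cmap sc (fst (Psi sc Gm Gp x)) (snd (Psi sc Gm Gp x)))" .
    have PsiUx: "Psi sc Gm Gp x \<in> ?U" using PsiU[OF x] by blast
    have z1: "Cmap sc (fst (\<Phi> x)) (snd (\<Phi> x)) 0 0 = 0"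
      by (rule Cmap_00) (use zU[OF Px] in auto)
    have z2: "Cmap sc (fst (Psi sc Gm Gp x)) (snd (Psi sc Gm Gp x)) 0 0 = 0"
      by (rule Cmap_00) (use zU[OF PsiUx] in auto)
    have "Cmap sc (fst (\<Phi> x)) (snd (\<Phi> x)) = Cmap sc (fst (Psi sc Gm Gp x)) (snd (Psi sc Gm Gp x))"
      by (rule fexp_inj[OF z1 z2 fe])
    then show "\<Phi> x = Psi sc Gm Gp x" by (rule injU[OF ds Px PsiUx])
  qed
  show ?thesis by (intro conjI c1 c2 c3 c4 c5 c6)
qed

end
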